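(* For $N<N'$ let $\iota_{N,N'}:\mathcal M(N,K)\to\mathcal M(N',K)$ be the closed embedding $(B,\psi,\overline\psi)\mapsto\left(\begin{bmatrix}B&0\\0&0\end{bmatrix},\begin{bmatrix}\psi\\0\end{bmatrix},\begin{bmatrix}\overline\psi&0\end{bmatrix}\right)$. Then: (1) $\iota_{N',N''}\circ\iota_{N,N'}=\iota_{N,N''}$ for $N<N'<N''$; (2) $\iota_{N,N'}$ is Poisson; (3) $\mathfrak m_{N_1',N_2'}\circ(\iota_{N_1,N_1'}\times\iota_{N_2,N_2'})=\iota_{N_1+N_2,N_1'+N_2'}\circ\mathfrak m_{N_1,N_2}$ for $N_1\le N_1'$, $N_2\le N_2'$ (with $\iota_{N,N}=\mathrm{Id}$).
   Context: $\mathcal M(N,K)=\mathrm{Rep}(N,K)/\!/\mathrm{GL}_N$, with $\mathrm{Rep}(N,K)$ the triples $(B,\psi,\overline\psi)$, $B\in\mathrm{Mat}_{N\times N}(\mathbb C)$, $\psi\in\mathrm{Mat}_{N\times K}$, $\overline\psi\in\mathrm{Mat}_{K\times N}$, and $g\cdot(B,\psi,\overline\psi)=(gBg^{-1},g\psi,\overline\psi g^{-1})$. The Poisson structure on $\mathcal M(N,K)$ is induced from $\{\psi_{ia},\overline\psi_{bj}\}=\delta_{ab}\delta_{ij}$, $\{B_{mn},B_{pq}\}=\delta_{np}\sum_a\overline\psi_{aq}\psi_{ma}-\delta_{mq}\sum_a\overline\psi_{an}\psi_{pa}$, $\{B_{mn},\psi_{ia}\}=\{B_{mn},\overline\psi_{bj}\}=0$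 (commuting variables). $\mathfrak m_{N_1,N_2}$ sends $(B^{(1)},\psi^{(1)},\overline\psi^{(1)})\times(B^{(2)},\psi^{(2)},\overline\psi^{(2)})$ to $\left(\begin{bmatrix}B^{(1)}&\psi^{(1)}\overline\psi^{(2)}\\-\psi^{(2)}\overline\psi^{(1)}&B^{(2)}\end{bmatrix},\begin{bmatrix}\psi^{(1)}\\\psi^{(2)}\end{bmatrix},\begin{bmatrix}\overline\psi^{(1)}&\overline\psi^{(2)}\end{bmatrix}\right)$. *)

theory Defs
  imports Complex_Main "Jordan_Normal_Form.Matrix"
begin

type_synonym rep = "complex mat \<times> complex mat \<times> complex mat"

definition Rep :: "nat \<Rightarrow> nat \<Rightarrow> rep set" where
  "Rep N K = {(B, p, q). B \<in> carrier_mat N N \<and> p \<in> carrier_mat N K \<and> q \<in> carrier_mat K N}"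

datatype coord = CB nat nat | CP nat nat | CPb nat nat

definition coords :: "nat \<Rightarrow> nat \<Rightarrow> coord set" where
  "coords N K = {CB i j | i j. i < N \<and> j < N} \<union> {CP i a | i a. i < N \<and> a < K}
              \<union> {CPb b j | b j. b < K \<and> j < N}"

fun coordval :: "coord \<Rightarrow> rep \<Rightarrow> complex" where
  "coordval (CB i j) (B, p, q) = B $$ (i, j)"
| "coordval (CP i a) (B, p, q) = p $$ (i, a)"
| "coordval (CPb b j) (B, p, q) = q $$ (b, j)"

inductive_set polyfun :: "nat \<Rightarrow> nat \<Rightarrow> (rep \<Rightarrow> complex) set" for N K where
  pf_const: "(\<lambda>x. c) \<in> polyfun N K"
| pf_coord: "c \<in> coords N K \<Longrightarrow> coordval c \<in> polyfun N K"
| pf_add: "f \<in> polyfun N K \<Longrightarrow> g \<in> polyfun N K \<Longrightarrow> (\<lambda>x. f x + g x) \<in> polyfun N K"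
| pf_mult: "f \<in> polyfun N K \<Longrightarrow> g \<in> polyfun N K \<Longrightarrow> (\<lambda>x. f x * g x) \<in> polyfun N K"

text \<open>GL_N action, g with inverse h: (g B g^-1, g psi, psibar g^-1).\<close>
fun act :: "complex mat \<Rightarrow> complex mat \<Rightarrow> rep \<Rightarrow> rep" where
  "act g h (B, p, q) = (g * B * h, g * p, q * h)"

text \<open>GL_N-invariant polynomial functions = coordinate ring of M(N,K).\<close>
definition invpoly :: "nat \<Rightarrow> nat \<Rightarrow> (rep \<Rightarrow> complex) \<Rightarrow> bool" where
  "invpoly N K f \<longleftrightarrow> f \<in> polyfun N K \<and>
     (\<forall>x\<in>Rep N K. \<forall>g h. g \<in> carrier_mat N N \<and> h \<in> carrier_mat N N \<and> g * h = 1\<^sub>m N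
        \<longrightarrow> f (act g h x) = f x)"

text \<open>Points of the affine GIT quotient M(N,K): classes of points of Rep(N,K)
  not separated by invariant polynomials.\<close>
definition qrel :: "nat \<Rightarrow> nat \<Rightarrow> (rep \<times> rep) set" where
  "qrel N K = {(x, y). x \<in> Rep N K \<and> y \<in> Rep N K \<and> (\<forall>f. invpoly N K f \<longrightarrow> f x = f y)}"

definition Mq :: "nat \<Rightarrow> nat \<Rightarrow> rep set set" where
  "Mq N K = Rep N K // qrel N K"

definition qmap :: "nat \<Rightarrow> nat \<Rightarrow> (rep \<Rightarrow> rep) \<Rightarrow> rep set \<Rightarrow> rep set" where
  "qmap N' K F X = qrel N' K `` {F (SOME x. x \<in> X)}"

definition qmap2 :: "nat \<Rightarrow> nat \<Rightarrow> (rep \<Rightarrow> rep \<Rightarrow> rep) \<Rightarrow> rep set \<Rightarrow> rep set \<Rightarrow> rep set" where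
  "qmap2 N' K F X Y = qrel N' K `` {F (SOME x. x \<in> X) (SOME y. y \<in> Y)}"

fun iota :: "nat \<Rightarrow> nat \<Rightarrow> nat \<Rightarrow> rep \<Rightarrow> rep" where
  "iota N N' K (B, p, q) =
     (four_block_mat B (0\<^sub>m N (N' - N)) (0\<^sub>m (N' - N) N) (0\<^sub>m (N' - N) (N' - N)),
      four_block_mat p (0\<^sub>m N 0) (0\<^sub>m (N' - N) K) (0\<^sub>m (N' - N) 0),
      four_block_mat q (0\<^sub>m K (N' - N)) (0\<^sub>m 0 N) (0\<^sub>m 0 (N' - N)))"

fun mmap :: "nat \<Rightarrow> nat \<Rightarrow> nat \<Rightarrow> rep \<Rightarrow> rep \<Rightarrow> rep" where
  "mmap N1 N2 K (B1, p1, q1) (B2, p2, q2) =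
     (four_block_mat B1 (p1 * q2) (- (p2 * q1)) B2,
      four_block_mat p1 (0\<^sub>m N1 0) p2 (0\<^sub>m N2 0),
      four_block_mat q1 q2 (0\<^sub>m 0 N1) (0\<^sub>m 0 N2))"

definition emat :: "nat \<Rightarrow> nat \<Rightarrow> nat \<Rightarrow> nat \<Rightarrow> complex mat" where
  "emat nr nc i j = mat nr nc (\<lambda>(k, l). if k = i \<and> l = j then 1 else 0)"

fun bump :: "rep \<Rightarrow> coord \<Rightarrow> complex \<Rightarrow> rep" where
  "bump (B, p, q) (CB i j) t = (B + t \<cdot>\<^sub>m emat (dim_row B) (dim_col B) i j, p, q)"
| "bump (B, p, q) (CP i a) t = (B, p + t \<cdot>\<^sub>m emat (dim_row p) (dim_col p) i a, q)"
| "bump (B, p, q) (CPb b j) t = (B, p, q + t \<cdot>\<^sub>m emat (dim_row q) (dim_col q) b j)"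

definition pd :: "(rep \<Rightarrow> complex) \<Rightarrow> coord \<Rightarrow> rep \<Rightarrow> complex" where
  "pd f c x = (SOME D. ((\<lambda>t. f (bump x c t)) has_field_derivative D) (at 0))"

text \<open>Brackets of the coordinate functions, evaluated at a point.\<close>
fun cbr :: "nat \<Rightarrow> coord \<Rightarrow> coord \<Rightarrow> rep \<Rightarrow> complex" where
  "cbr K (CP i a) (CPb b j) x = (if a = b \<and> i = j then 1 else 0)"
| "cbr K (CPb b j) (CP i a) x = - (if a = b \<and> i = j then 1 else 0)"
| "cbr K (CB m n) (CB p' q') (B, p, q) =
     (if n = p' then (\<Sum>a<K. q $$ (a, q') * p $$ (m, a)) else 0)
   - (if m = q' then (\<Sum>a<K. q $$ (a, n) * p $$ (p', a)) else 0)"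
| "cbr K c c' x = 0"

definition pbr :: "nat \<Rightarrow> nat \<Rightarrow> (rep \<Rightarrow> complex) \<Rightarrow> (rep \<Rightarrow> complex) \<Rightarrow> rep \<Rightarrow> complex" where
  "pbr N K f g x = (\<Sum>c\<in>coords N K. \<Sum>c'\<in>coords N K. pd f c x * pd g c' x * cbr K c c' x)"

end

theory Submission
  imports Defs
begin


lemma mult_idx:
  assumes "A \<in> carrier_mat n m" "B \<in> carrier_mat m l" "i < n" "j < l"
  shows "(A * B) $$ (i, j) = (\<Sum>k<m. A $$ (i, k) * B $$ (k, j))"
  using assms by (auto simp: scalar_prod_def lessThan_atLeast0 intro!: sum.cong)

lemma rowcol:
  assumes "A \<in> carrier_mat n m" "B \<in> carrier_mat m l" "i < n" "j < l"
  shows "row A i \<bullet> col B j = (\<Sum>k<m. A $$ (i, k) * B $$ (k, j))"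
  using mult_idx[OF assms] assms by simp

lemma uminus_zero_mat'[simp]: "- 0\<^sub>m n m = (0\<^sub>m n m :: 'a :: group_add mat)"
  by (rule eq_matI) auto

lemma act_Rep:
  assumes "x \<in> Rep N K" "g \<in> carrier_mat N N" "h \<in> carrier_mat N N"
  shows "act g h x \<in> Rep N K"
  using assms by (cases x) (auto simp: Rep_def)

lemma qrel_refl: "x \<in> Rep N K \<Longrightarrow> (x, x) \<in> qrel N K"
  by (simp add: qrel_def)

lemma qrel_sym: "(x, y) \<in> qrel N K \<Longrightarrow> (y, x) \<in> qrel N K"
  by (auto simp: qrel_def)

lemma qrel_trans: "(x, y) \<in> qrel N K \<Longrightarrow> (y, z) \<in> qrel N K \<Longrightarrow> (x, z) \<in> qrel N K"
  by (auto simp: qrel_def)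

lemma qrel_class_eq: "(x, y) \<in> qrel N K \<Longrightarrow> qrel N K `` {x} = qrel N K `` {y}"
  using qrel_sym qrel_trans by blast

lemma Mq_some:
  assumes "X \<in> Mq N K"
  shows "(SOME x. x \<in> X) \<in> Rep N K \<and> X = qrel N K `` {SOME x. x \<in> X}"
proof -
  obtain x where x: "x \<in> Rep N K" "X = qrel N K `` {x}"
    using assms unfolding Mq_def quotient_def by auto
  have "x \<in> X" using x qrel_refl by auto
  then have s: "(SOME x. x \<in> X) \<in> X" by (rule someI)
  then have "(x, SOME x. x \<in> X) \<in> qrel N K" using x by auto
  then have "X = qrel N K `` {SOME x. x \<in> X}" using x qrel_class_eq by metis
  moreover have "(SOME x. x \<in> X) \<in> Rep N K" using s x by (auto simp: qrel_def)
  ultimately show ?thesis by blast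
qed

lemma class_some:
  assumes "z \<in> Rep N K"
  shows "(z, SOME y. y \<in> qrel N K `` {z}) \<in> qrel N K"
proof -
  have "z \<in> qrel N K `` {z}" using assms qrel_refl by auto
  then have "(SOME y. y \<in> qrel N K `` {z}) \<in> qrel N K `` {z}" by (rule someI)
  then show ?thesis by auto
qed

lemma qmap_eq:
  assumes "X \<in> Mq N K"
  shows "qmap N' K F X = qrel N' K `` {F (SOME x. x \<in> X)}"
  by (simp add: qmap_def)

section \<open>Polynomial functions\<close>

lemma polyfun_sum:
  assumes "finite A" "\<And>a. a \<in> A \<Longrightarrow> f a \<in> polyfun N K"
  shows "(\<lambda>x. \<Sum>a\<in>A. f a x) \<in> polyfun N K"
  using assms
proof (induction A rule: finite_induct)
  case empty
  then show ?case using polyfun.pf_const[of 0] by simp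
next
  case (insert a A)
  then have "(\<lambda>x. f a x + (\<Sum>a\<in>A. f a x)) \<in> polyfun N K"
    by (intro polyfun.pf_add) auto
  then show ?case using insert by simp
qed

definition polyon :: "nat \<Rightarrow> nat \<Rightarrow> (rep \<Rightarrow> complex) \<Rightarrow> bool" where
  "polyon N K f \<longleftrightarrow> (\<exists>p\<in>polyfun N K. \<forall>x\<in>Rep N K. f x = p x)"

lemma polyon_const: "polyon N K (\<lambda>x. c)"
  unfolding polyon_def by (rule bexI[of _ "\<lambda>x. c"]) (auto intro: polyfun.intros)

lemma polyon_coord: "c \<in> coords N K \<Longrightarrow> polyon N K (coordval c)"
  unfolding polyon_def by (auto intro: polyfun.intros)

lemma polyon_add: "polyon N K f \<Longrightarrow> polyon N K g \<Longrightarrow> polyon N K (\<lambda>x. f x + g x)"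
  unfolding polyon_def by (metis (no_types, lifting) polyfun.pf_add)

lemma polyon_mult: "polyon N K f \<Longrightarrow> polyon N K g \<Longrightarrow> polyon N K (\<lambda>x. f x * g x)"
  unfolding polyon_def by (metis (no_types, lifting) polyfun.pf_mult)

lemma polyon_sum:
  assumes "finite A" "\<And>a. a \<in> A \<Longrightarrow> polyon N K (f a)"
  shows "polyon N K (\<lambda>x. \<Sum>a\<in>A. f a x)"
  using assms
proof (induction A rule: finite_induct)
  case empty
  then show ?case using polyon_const[of N K 0] by simp
next
  case (insert a A)
  then have "polyon N K (\<lambda>x. f a x + (\<Sum>a\<in>A. f a x))"
    by (intro polyon_add) auto
  then show ?case using insert by simp
qed

lemma polyon_cong: "polyon N K f \<Longrightarrow> (\<And>x. x \<in> Rep N K \<Longrightarrow> f x = g x) \<Longrightarrow> polyon N K g"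
  unfolding polyon_def by auto

lemma polyfun_comp:
  assumes "f \<in> polyfun N' K"
    and "\<And>c. c \<in> coords N' K \<Longrightarrow> polyon N K (\<lambda>x. coordval c (F x))"
  shows "polyon N K (\<lambda>x. f (F x))"
  using assms(1)
proof (induction rule: polyfun.induct)
  case (pf_const c)
  then show ?case by (rule polyon_const)
next
  case (pf_coord c)
  then show ?case using assms(2) by blast
next
  case (pf_add f g)
  then show ?case using polyon_add by blast
next
  case (pf_mult f g)
  then show ?case using polyon_mult by blast
qed

lemma respects:
  assumes Frep: "\<And>x. x \<in> Rep N K \<Longrightarrow> F x \<in> Rep N' K"
    and poly: "\<And>c. c \<in> coords N' K \<Longrightarrow> polyon N K (\<lambda>x. coordval c (F x))"
    and equi: "\<And>x g h. x \<in> Rep N K \<Longrightarrow> g \<in> carrier_mat N N \<Longrightarrow> h \<in> carrier_mat N N \<Longrightarrow> g * h = 1\<^sub>m N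
        \<Longrightarrow> \<exists>g' h'. g' \<in> carrier_mat N' N' \<and> h' \<in> carrier_mat N' N' \<and> g' * h' = 1\<^sub>m N'
             \<and> F (act g h x) = act g' h' (F x)"
    and xy: "(x, y) \<in> qrel N K"
  shows "(F x, F y) \<in> qrel N' K"
proof -
  have x: "x \<in> Rep N K" and y: "y \<in> Rep N K" using xy by (auto simp: qrel_def)
  have "f (F x) = f (F y)" if f: "invpoly N' K f" for f
  proof -
    obtain p where p: "p \<in> polyfun N K" "\<And>z. z \<in> Rep N K \<Longrightarrow> f (F z) = p z"
      using polyfun_comp[OF _ poly, of f] f unfolding invpoly_def polyon_def by blast
    have "invpoly N K p" unfolding invpoly_def
    proof (intro conjI p(1) ballI allI impI)
      fix z and g h :: "complex mat" assume z: "z \<in> Rep N K" and gh: "g \<in> carrier_mat N N \<and> h \<in> carrier_mat N N \<and> g * h = 1\<^sub>m N"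
      obtain g' h' where g': "g' \<in> carrier_mat N' N'" "h' \<in> carrier_mat N' N'" "g' * h' = 1\<^sub>m N'"
        and e: "F (act g h z) = act g' h' (F z)" using equi[OF z] gh by blast
      have "p (act g h z) = f (F (act g h z))" using p(2) act_Rep z gh by metis
      also have "\<dots> = f (F z)" using e f g' Frep[OF z] unfolding invpoly_def by auto
      also have "\<dots> = p z" using p(2) z by auto
      finally show "p (act g h z) = p z" .
    qed
    then have "p x = p y" using xy by (auto simp: qrel_def)
    then show ?thesis using p(2) x y by auto
  qed
  then show ?thesis using Frep x y by (auto simp: qrel_def)
qed

lemma finite_coords: "finite (coords N K)"
proof -
  have "coords N K \<subseteq> (\<lambda>(i,j). CB i j) ` ({..<N} \<times> {..<N}) \<union> (\<lambda>(i,j). CP i j) ` ({..<N} \<times> {..<K})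
     \<union> (\<lambda>(i,j). CPb i j) ` ({..<K} \<times> {..<N})"
    unfolding coords_def by auto
  then show ?thesis by (rule finite_subset) auto
qed

section \<open>iota\<close>

definition bd :: "nat \<Rightarrow> complex mat \<Rightarrow> complex mat" where
  "bd d g = four_block_mat g (0\<^sub>m (dim_row g) d) (0\<^sub>m d (dim_row g)) (1\<^sub>m d)"

lemma bd_carrier: "g \<in> carrier_mat N N \<Longrightarrow> bd d g \<in> carrier_mat (N + d) (N + d)"
  unfolding bd_def by auto

lemma bd_mult:
  assumes "g \<in> carrier_mat N N" "h \<in> carrier_mat N N"
  shows "bd d g * bd d h = bd d (g * h)"
  using assms unfolding bd_def
  by (subst mult_four_block_mat[of _ N N _ d _ d _ _ N _ d]) (simp_all add: bd_carrier)

lemma bd_one: "bd d (1\<^sub>m N) = 1\<^sub>m (N + d)"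
  unfolding bd_def by simp

lemma iota_Rep: "x \<in> Rep N K \<Longrightarrow> N \<le> N' \<Longrightarrow> iota N N' K x \<in> Rep N' K"
proof (cases x)
  case (fields B p q)
  assume "x \<in> Rep N K" "N \<le> N'"
  then have B: "B \<in> carrier_mat N N" and p: "p \<in> carrier_mat N K" and q: "q \<in> carrier_mat K N"
    using fields by (auto simp: Rep_def)
  have e: "N + (N' - N) = N'" using \<open>N \<le> N'\<close> by simp
  have 1: "four_block_mat B (0\<^sub>m N (N' - N)) (0\<^sub>m (N' - N) N) (0\<^sub>m (N' - N) (N' - N)) \<in> carrier_mat N' N'"
    using four_block_carrier_mat[OF B zero_carrier_mat[of "N' - N" "N' - N"]] unfolding e by simp
  have 2: "four_block_mat p (0\<^sub>m N 0) (0\<^sub>m (N' - N) K) (0\<^sub>m (N' - N) 0) \<in> carrier_mat N' K"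
    using four_block_carrier_mat[OF p zero_carrier_mat[of "N' - N" 0]] unfolding e by simp
  have 3: "four_block_mat q (0\<^sub>m K (N' - N)) (0\<^sub>m 0 N) (0\<^sub>m 0 (N' - N)) \<in> carrier_mat K N'"
    using four_block_carrier_mat[OF q zero_carrier_mat[of 0 "N' - N"]] unfolding e by simp
  show ?thesis using 1 2 3 unfolding fields Rep_def by simp
qed

lemma iota_equi:
  assumes x: "x \<in> Rep N K" and NN: "N \<le> N'" and g: "g \<in> carrier_mat N N" and h: "h \<in> carrier_mat N N"
  shows "iota N N' K (act g h x) = act (bd (N' - N) g) (bd (N' - N) h) (iota N N' K x)"
proof -
  obtain B p q where xe: "x = (B, p, q)" by (cases x)
  have B: "B \<in> carrier_mat N N" and p: "p \<in> carrier_mat N K" and q: "q \<in> carrier_mat K N"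
    using x xe by (auto simp: Rep_def)
  define d where "d = N' - N"
  have gd: "dim_row g = N" "dim_row h = N" using g h by auto
  have 1: "bd d g * four_block_mat B (0\<^sub>m N d) (0\<^sub>m d N) (0\<^sub>m d d) * bd d h
     = four_block_mat (g * B * h) (0\<^sub>m N d) (0\<^sub>m d N) (0\<^sub>m d d)"
  proof -
    have "bd d g * four_block_mat B (0\<^sub>m N d) (0\<^sub>m d N) (0\<^sub>m d d)
       = four_block_mat (g * B) (0\<^sub>m N d) (0\<^sub>m d N) (0\<^sub>m d d)"
      unfolding bd_def gd using g B
      by (subst mult_four_block_mat[of _ N N _ d _ d _ _ N _ d]) simp_all
    moreover have "four_block_mat (g * B) (0\<^sub>m N d) (0\<^sub>m d N) (0\<^sub>m d d) * bd d h
       = four_block_mat (g * B * h) (0\<^sub>m N d) (0\<^sub>m d N) (0\<^sub>m d d)"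
      unfolding bd_def gd using g B h
      by (subst mult_four_block_mat[of _ N N _ d _ d _ _ N _ d]) simp_all
    ultimately show ?thesis by simp
  qed
  have 2: "bd d g * four_block_mat p (0\<^sub>m N 0) (0\<^sub>m d K) (0\<^sub>m d 0)
     = four_block_mat (g * p) (0\<^sub>m N 0) (0\<^sub>m d K) (0\<^sub>m d 0)"
    unfolding bd_def gd using g p
    by (subst mult_four_block_mat[of _ N N _ d _ d _ _ K _ 0]) simp_all
  have 3: "four_block_mat q (0\<^sub>m K d) (0\<^sub>m 0 N) (0\<^sub>m 0 d) * bd d h
     = four_block_mat (q * h) (0\<^sub>m K d) (0\<^sub>m 0 N) (0\<^sub>m 0 d)"
    unfolding bd_def gd using h q
    by (subst mult_four_block_mat[of _ K N _ d _ 0 _ _ N _ d]) simp_all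
  show ?thesis unfolding xe act.simps iota.simps d_def[symmetric] 1 2 3 by (rule refl)
qed

definition extr :: "nat \<Rightarrow> nat \<Rightarrow> nat \<Rightarrow> rep \<Rightarrow> rep" where
  "extr N N' K x = (case x of (B, p, q) \<Rightarrow>
     (mat N' N' (\<lambda>(i, j). if i < N \<and> j < N then B $$ (i, j) else 0),
      mat N' K (\<lambda>(i, a). if i < N then p $$ (i, a) else 0),
      mat K N' (\<lambda>(b, j). if j < N then q $$ (b, j) else 0)))"

lemma iota_extr:
  assumes x: "x \<in> Rep N K" and NN: "N \<le> N'"
  shows "iota N N' K x = extr N N' K x"
proof -
  obtain B p q where xe: "x = (B, p, q)" by (cases x)
  have d: "dim_row B = N" "dim_col B = N" "dim_row p = N" "dim_col p = K" "dim_row q = K" "dim_col q = N"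
    using x xe by (auto simp: Rep_def)
  have e: "N + (N' - N) = N'" using NN by simp
  have 1: "four_block_mat B (0\<^sub>m N (N' - N)) (0\<^sub>m (N' - N) N) (0\<^sub>m (N' - N) (N' - N))
      = mat N' N' (\<lambda>(i, j). if i < N \<and> j < N then B $$ (i, j) else 0)"
    by (rule eq_matI) (simp_all add: d e)
  have 2: "four_block_mat p (0\<^sub>m N 0) (0\<^sub>m (N' - N) K) (0\<^sub>m (N' - N) 0)
      = mat N' K (\<lambda>(i, a). if i < N then p $$ (i, a) else 0)"
    by (rule eq_matI) (simp_all add: d e)
  have 3: "four_block_mat q (0\<^sub>m K (N' - N)) (0\<^sub>m 0 N) (0\<^sub>m 0 (N' - N))
      = mat K N' (\<lambda>(b, j). if j < N then q $$ (b, j) else 0)"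
    by (rule eq_matI) (simp_all add: d e)
  show ?thesis unfolding xe iota.simps extr_def 1 2 3 by simp
qed

lemma coordval_extr:
  "i < N' \<Longrightarrow> j < N' \<Longrightarrow> coordval (CB i j) (extr N N' K x) = (if i < N \<and> j < N then coordval (CB i j) x else 0)"
  "i < N' \<Longrightarrow> a < K \<Longrightarrow> coordval (CP i a) (extr N N' K x) = (if i < N then coordval (CP i a) x else 0)"
  "b < K \<Longrightarrow> j < N' \<Longrightarrow> coordval (CPb b j) (extr N N' K x) = (if j < N then coordval (CPb b j) x else 0)"
  by (cases x, simp add: extr_def)+

lemma iota_poly:
  assumes NN: "N \<le> N'" and c: "c \<in> coords N' K"
  shows "polyon N K (\<lambda>x. coordval c (iota N N' K x))"
proof -
  have cases: "(\<exists>c'\<in>coords N K. \<forall>x\<in>Rep N K. coordval c (iota N N' K x) = coordval c' x)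
     \<or> (\<forall>x\<in>Rep N K. coordval c (iota N N' K x) = 0)"
  proof (cases c)
    case (CB i j)
    then have ij: "i < N'" "j < N'" using c by (auto simp: coords_def)
    show ?thesis
    proof (cases "i < N \<and> j < N")
      case True
      then show ?thesis using ij CB by (intro disjI1 bexI[of _ "CB i j"]) (auto simp: iota_extr NN coordval_extr coords_def)
    next
      case False
      then show ?thesis using ij CB by (intro disjI2) (auto simp: iota_extr NN coordval_extr)
    qed
  next
    case (CP i a)
    then have ij: "i < N'" "a < K" using c by (auto simp: coords_def)
    show ?thesis
    proof (cases "i < N")
      case True
      then show ?thesis using ij CP by (intro disjI1 bexI[of _ "CP i a"]) (auto simp: iota_extr NN coordval_extr coords_def)
    next
      case False
      then show ?thesis using ij CP by (intro disjI2) (auto simp: iota_extr NN coordval_extr)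
    qed
  next
    case (CPb b j)
    then have ij: "b < K" "j < N'" using c by (auto simp: coords_def)
    show ?thesis
    proof (cases "j < N")
      case True
      then show ?thesis using ij CPb by (intro disjI1 bexI[of _ "CPb b j"]) (auto simp: iota_extr NN coordval_extr coords_def)
    next
      case False
      then show ?thesis using ij CPb by (intro disjI2) (auto simp: iota_extr NN coordval_extr)
    qed
  qed
  then show ?thesis
  proof
    assume "\<exists>c'\<in>coords N K. \<forall>x\<in>Rep N K. coordval c (iota N N' K x) = coordval c' x"
    then obtain c' where "c' \<in> coords N K" "\<forall>x\<in>Rep N K. coordval c (iota N N' K x) = coordval c' x" by blast
    then show ?thesis using polyon_coord polyon_cong by metis
  next
    assume "\<forall>x\<in>Rep N K. coordval c (iota N N' K x) = 0"
    then show ?thesis using polyon_const[of N K 0] polyon_cong by (metis (no_types, lifting))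
  qed
qed

lemma iota_respects:
  assumes NN: "N \<le> N'" and xy: "(x, y) \<in> qrel N K"
  shows "(iota N N' K x, iota N N' K y) \<in> qrel N' K"
proof (rule respects[OF _ _ _ xy])
  show "\<And>x. x \<in> Rep N K \<Longrightarrow> iota N N' K x \<in> Rep N' K" using iota_Rep NN by blast
  show "\<And>c. c \<in> coords N' K \<Longrightarrow> polyon N K (\<lambda>x. coordval c (iota N N' K x))"
    using iota_poly NN by blast
  fix x and g h :: "complex mat"
  assume x: "x \<in> Rep N K" and g: "g \<in> carrier_mat N N" and h: "h \<in> carrier_mat N N" and gh: "g * h = 1\<^sub>m N"
  have e: "N + (N' - N) = N'" using NN by simp
  show "\<exists>g' h'. g' \<in> carrier_mat N' N' \<and> h' \<in> carrier_mat N' N' \<and> g' * h' = 1\<^sub>m N'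
             \<and> iota N N' K (act g h x) = act g' h' (iota N N' K x)"
    apply (rule exI[of _ "bd (N' - N) g"], rule exI[of _ "bd (N' - N) h"])
    using bd_carrier[OF g, of "N' - N"] bd_carrier[OF h, of "N' - N"] bd_mult[OF g h, of "N' - N"]
      bd_one[of "N' - N" N] iota_equi[OF x NN g h] unfolding e gh by simp
qed

lemma extr_extr:
  assumes "N \<le> N'" "N' \<le> N''"
  shows "extr N' N'' K (extr N N' K x) = extr N N'' K x"
  using assms by (cases x) (auto simp: extr_def intro!: eq_matI)

lemma part1:
  assumes "N < N'" "N' < N''" "X \<in> Mq N K"
  shows "qmap N'' K (iota N' N'' K) (qmap N' K (iota N N' K) X) = qmap N'' K (iota N N'' K) X"
proof -
  define x where "x = (SOME x. x \<in> X)"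
  have x: "x \<in> Rep N K" using Mq_some[OF assms(3)] x_def by auto
  define y where "y = (SOME y. y \<in> qrel N' K `` {iota N N' K x})"
  have ix: "iota N N' K x \<in> Rep N' K" using iota_Rep x assms by auto
  have xy: "(iota N N' K x, y) \<in> qrel N' K" using class_some[OF ix] y_def by simp
  have "(iota N' N'' K (iota N N' K x), iota N' N'' K y) \<in> qrel N'' K"
    using iota_respects[OF _ xy] assms by simp
  moreover have "iota N' N'' K (iota N N' K x) = iota N N'' K x"
    using x ix assms by (simp add: iota_extr extr_extr)
  ultimately have "(iota N N'' K x, iota N' N'' K y) \<in> qrel N'' K" by simp
  then show ?thesis unfolding qmap_def x_def[symmetric] y_def[symmetric] using qrel_class_eq by metis
qed

section \<open>mmap\<close>

definition mmB :: "nat \<Rightarrow> nat \<Rightarrow> rep \<Rightarrow> rep \<Rightarrow> nat \<Rightarrow> nat \<Rightarrow> complex" where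
  "mmB N1 K x1 x2 i j = (case x1 of (B1, p1, q1) \<Rightarrow> case x2 of (B2, p2, q2) \<Rightarrow>
     (if i < N1 then if j < N1 then B1 $$ (i, j) else (\<Sum>a<K. p1 $$ (i, a) * q2 $$ (a, j - N1))
      else if j < N1 then - (\<Sum>a<K. p2 $$ (i - N1, a) * q1 $$ (a, j)) else B2 $$ (i - N1, j - N1)))"

definition mmP :: "nat \<Rightarrow> rep \<Rightarrow> rep \<Rightarrow> nat \<Rightarrow> nat \<Rightarrow> complex" where
  "mmP N1 x1 x2 i a = (if i < N1 then fst (snd x1) $$ (i, a) else fst (snd x2) $$ (i - N1, a))"

definition mmQ :: "nat \<Rightarrow> rep \<Rightarrow> rep \<Rightarrow> nat \<Rightarrow> nat \<Rightarrow> complex" where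
  "mmQ N1 x1 x2 b j = (if j < N1 then snd (snd x1) $$ (b, j) else snd (snd x2) $$ (b, j - N1))"

lemma mmap_mat:
  assumes x1: "x1 \<in> Rep N1 K" and x2: "x2 \<in> Rep N2 K"
  shows "mmap N1 N2 K x1 x2 = (mat (N1 + N2) (N1 + N2) (\<lambda>(i, j). mmB N1 K x1 x2 i j),
     mat (N1 + N2) K (\<lambda>(i, a). mmP N1 x1 x2 i a), mat K (N1 + N2) (\<lambda>(b, j). mmQ N1 x1 x2 b j))"
proof -
  obtain B1 p1 q1 where e1: "x1 = (B1, p1, q1)" by (cases x1)
  obtain B2 p2 q2 where e2: "x2 = (B2, p2, q2)" by (cases x2)
  have B1: "B1 \<in> carrier_mat N1 N1" and p1: "p1 \<in> carrier_mat N1 K" and q1: "q1 \<in> carrier_mat K N1"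
    using x1 e1 by (auto simp: Rep_def)
  have B2: "B2 \<in> carrier_mat N2 N2" and p2: "p2 \<in> carrier_mat N2 K" and q2: "q2 \<in> carrier_mat K N2"
    using x2 e2 by (auto simp: Rep_def)
  have d: "dim_row B1 = N1" "dim_col B1 = N1" "dim_row p1 = N1" "dim_col p1 = K" "dim_row q1 = K" "dim_col q1 = N1"
     "dim_row B2 = N2" "dim_col B2 = N2" "dim_row p2 = N2" "dim_col p2 = K" "dim_row q2 = K" "dim_col q2 = N2"
    using B1 p1 q1 B2 p2 q2 by auto
  have 1: "four_block_mat B1 (p1 * q2) (- (p2 * q1)) B2 = mat (N1 + N2) (N1 + N2) (\<lambda>(i, j). mmB N1 K x1 x2 i j)"
  proof (rule eq_matI)
    fix i j assume i: "i < dim_row (mat (N1 + N2) (N1 + N2) (\<lambda>(i, j). mmB N1 K x1 x2 i j))"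
      and j: "j < dim_col (mat (N1 + N2) (N1 + N2) (\<lambda>(i, j). mmB N1 K x1 x2 i j))"
    then have i': "i < N1 + N2" and j': "j < N1 + N2" by auto
    show "four_block_mat B1 (p1 * q2) (- (p2 * q1)) B2 $$ (i, j) = mat (N1 + N2) (N1 + N2) (\<lambda>(i, j). mmB N1 K x1 x2 i j) $$ (i, j)"
      using i' j' p1 q2 p2 q1 by (simp add: d mmB_def e1 e2 rowcol[OF p1 q2] rowcol[OF p2 q1])
  qed (simp_all add: d)
  have 2: "four_block_mat p1 (0\<^sub>m N1 0) p2 (0\<^sub>m N2 0) = mat (N1 + N2) K (\<lambda>(i, a). mmP N1 x1 x2 i a)"
    by (rule eq_matI) (simp_all add: d mmP_def e1 e2)
  have 3: "four_block_mat q1 q2 (0\<^sub>m 0 N1) (0\<^sub>m 0 N2) = mat K (N1 + N2) (\<lambda>(b, j). mmQ N1 x1 x2 b j)"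
    by (rule eq_matI) (simp_all add: d mmQ_def e1 e2)
  show ?thesis unfolding e1 e2 mmap.simps using 1 2 3 unfolding e1 e2 by simp
qed

lemma mmap_Rep: "x1 \<in> Rep N1 K \<Longrightarrow> x2 \<in> Rep N2 K \<Longrightarrow> mmap N1 N2 K x1 x2 \<in> Rep (N1 + N2) K"
  by (simp add: mmap_mat Rep_def)

lemma polyon_lin1:
  fixes K' :: nat
  assumes "\<And>a. a < K' \<Longrightarrow> c' a \<in> coords N K"
  shows "polyon N K (\<lambda>x. \<Sum>a<K'. coordval (c' a) x * w a)"
  by (rule polyon_sum) (auto intro!: polyon_mult polyon_coord polyon_const assms)

lemma polyon_lin2:
  fixes K' :: nat
  assumes "\<And>a. a < K' \<Longrightarrow> c' a \<in> coords N K"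
  shows "polyon N K (\<lambda>x. \<Sum>a<K'. w a * coordval (c' a) x)"
  by (rule polyon_sum) (auto intro!: polyon_mult polyon_coord polyon_const assms)

lemma polyon_neg: "polyon N K f \<Longrightarrow> polyon N K (\<lambda>x. - f x)"
  using polyon_mult[OF polyon_const[of N K "-1"], of f] by simp

lemma mmap_poly1:
  assumes x2: "x2 \<in> Rep N2 K" and c: "c \<in> coords (N1 + N2) K"
  shows "polyon N1 K (\<lambda>x. coordval c (mmap N1 N2 K x x2))"
proof -
  obtain B2 p2 q2 where e2: "x2 = (B2, p2, q2)" by (cases x2)
  show ?thesis
  proof (cases c)
    case (CB i j)
    then have ij: "i < N1 + N2" "j < N1 + N2" using c by (auto simp: coords_def)
    have eq: "\<And>x. x \<in> Rep N1 K \<Longrightarrow> coordval c (mmap N1 N2 K x x2) = mmB N1 K x x2 i j"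
      using ij x2 CB by (simp add: mmap_mat)
    have "polyon N1 K (\<lambda>x. mmB N1 K x x2 i j)"
    proof (cases "i < N1")
      case True
      show ?thesis
      proof (cases "j < N1")
        case True
        show ?thesis
          by (rule polyon_cong[OF polyon_coord[of "CB i j"]]) (use \<open>i < N1\<close> True in \<open>auto simp: coords_def mmB_def e2 split: prod.splits\<close>)
      next
        case False
        show ?thesis
          by (rule polyon_cong[OF polyon_lin1[of K "\<lambda>a. CP i a" N1 K "\<lambda>a. q2 $$ (a, j - N1)"]])
            (use \<open>i < N1\<close> False in \<open>auto simp: coords_def mmB_def e2 split: prod.splits\<close>)
      qed
    next
      case False
      show ?thesis
      proof (cases "j < N1")
        case True
        show ?thesis
          by (rule polyon_cong[OF polyon_neg[OF polyon_lin2[of K "\<lambda>a. CPb a j" N1 K "\<lambda>a. p2 $$ (i - N1, a)"]]])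
            (use \<open>\<not> i < N1\<close> True in \<open>auto simp: coords_def mmB_def e2 split: prod.splits\<close>)
      next
        case False
        show ?thesis
          by (rule polyon_cong[OF polyon_const[of N1 K "B2 $$ (i - N1, j - N1)"]])
            (use \<open>\<not> i < N1\<close> False in \<open>auto simp: coords_def mmB_def e2 split: prod.splits\<close>)
      qed
    qed
    then show ?thesis using eq polyon_cong by (metis (no_types, lifting))
  next
    case (CP i a)
    then have ij: "i < N1 + N2" "a < K" using c by (auto simp: coords_def)
    have eq: "\<And>x. x \<in> Rep N1 K \<Longrightarrow> coordval c (mmap N1 N2 K x x2) = mmP N1 x x2 i a"
      using ij x2 CP by (simp add: mmap_mat)
    have "polyon N1 K (\<lambda>x. mmP N1 x x2 i a)"
    proof (cases "i < N1")
      case True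
      show ?thesis
        by (rule polyon_cong[OF polyon_coord[of "CP i a"]]) (use True ij in \<open>auto simp: coords_def mmP_def\<close>)
    next
      case False
      show ?thesis
        by (rule polyon_cong[OF polyon_const[of N1 K "p2 $$ (i - N1, a)"]]) (use False in \<open>auto simp: mmP_def e2\<close>)
    qed
    then show ?thesis using eq polyon_cong by (metis (no_types, lifting))
  next
    case (CPb b j)
    then have ij: "b < K" "j < N1 + N2" using c by (auto simp: coords_def)
    have eq: "\<And>x. x \<in> Rep N1 K \<Longrightarrow> coordval c (mmap N1 N2 K x x2) = mmQ N1 x x2 b j"
      using ij x2 CPb by (simp add: mmap_mat)
    have "polyon N1 K (\<lambda>x. mmQ N1 x x2 b j)"
    proof (cases "j < N1")
      case True
      show ?thesis
        by (rule polyon_cong[OF polyon_coord[of "CPb b j"]]) (use True ij in \<open>auto simp: coords_def mmQ_def\<close>)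
    next
      case False
      show ?thesis
        by (rule polyon_cong[OF polyon_const[of N1 K "q2 $$ (b, j - N1)"]]) (use False in \<open>auto simp: mmQ_def e2\<close>)
    qed
    then show ?thesis using eq polyon_cong by (metis (no_types, lifting))
  qed
qed

lemma mmap_poly2:
  assumes x1: "x1 \<in> Rep N1 K" and c: "c \<in> coords (N1 + N2) K"
  shows "polyon N2 K (\<lambda>x. coordval c (mmap N1 N2 K x1 x))"
proof -
  obtain B1 p1 q1 where e1: "x1 = (B1, p1, q1)" by (cases x1)
  show ?thesis
  proof (cases c)
    case (CB i j)
    then have ij: "i < N1 + N2" "j < N1 + N2" using c by (auto simp: coords_def)
    have eq: "\<And>x. x \<in> Rep N2 K \<Longrightarrow> coordval c (mmap N1 N2 K x1 x) = mmB N1 K x1 x i j"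
      using ij x1 CB by (simp add: mmap_mat)
    have "polyon N2 K (\<lambda>x. mmB N1 K x1 x i j)"
    proof (cases "i < N1")
      case True
      show ?thesis
      proof (cases "j < N1")
        case True
        show ?thesis
          by (rule polyon_cong[OF polyon_const[of N2 K "B1 $$ (i, j)"]])
            (use \<open>i < N1\<close> True in \<open>auto simp: mmB_def e1 split: prod.splits\<close>)
      next
        case False
        show ?thesis
          by (rule polyon_cong[OF polyon_lin2[of K "\<lambda>a. CPb a (j - N1)" N2 K "\<lambda>a. p1 $$ (i, a)"]])
            (use \<open>i < N1\<close> False ij in \<open>auto simp: coords_def mmB_def e1 split: prod.splits\<close>)
      qed
    next
      case False
      show ?thesis
      proof (cases "j < N1")
        case True
        show ?thesis
          by (rule polyon_cong[OF polyon_neg[OF polyon_lin1[of K "\<lambda>a. CP (i - N1) a" N2 K "\<lambda>a. q1 $$ (a, j)"]]])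
            (use \<open>\<not> i < N1\<close> True ij in \<open>auto simp: coords_def mmB_def e1 split: prod.splits\<close>)
      next
        case False
        show ?thesis
          by (rule polyon_cong[OF polyon_coord[of "CB (i - N1) (j - N1)"]])
            (use \<open>\<not> i < N1\<close> False ij in \<open>auto simp: coords_def mmB_def e1 split: prod.splits\<close>)
      qed
    qed
    then show ?thesis using eq polyon_cong by (metis (no_types, lifting))
  next
    case (CP i a)
    then have ij: "i < N1 + N2" "a < K" using c by (auto simp: coords_def)
    have eq: "\<And>x. x \<in> Rep N2 K \<Longrightarrow> coordval c (mmap N1 N2 K x1 x) = mmP N1 x1 x i a"
      using ij x1 CP by (simp add: mmap_mat)
    have "polyon N2 K (\<lambda>x. mmP N1 x1 x i a)"
    proof (cases "i < N1")
      case True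
      show ?thesis
        by (rule polyon_cong[OF polyon_const[of N2 K "p1 $$ (i, a)"]]) (use True in \<open>auto simp: mmP_def e1\<close>)
    next
      case False
      show ?thesis
        by (rule polyon_cong[OF polyon_coord[of "CP (i - N1) a"]]) (use False ij in \<open>auto simp: coords_def mmP_def\<close>)
    qed
    then show ?thesis using eq polyon_cong by (metis (no_types, lifting))
  next
    case (CPb b j)
    then have ij: "b < K" "j < N1 + N2" using c by (auto simp: coords_def)
    have eq: "\<And>x. x \<in> Rep N2 K \<Longrightarrow> coordval c (mmap N1 N2 K x1 x) = mmQ N1 x1 x b j"
      using ij x1 CPb by (simp add: mmap_mat)
    have "polyon N2 K (\<lambda>x. mmQ N1 x1 x b j)"
    proof (cases "j < N1")
      case True
      show ?thesis
        by (rule polyon_cong[OF polyon_const[of N2 K "q1 $$ (b, j)"]]) (use True in \<open>auto simp: mmQ_def e1\<close>)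
    next
      case False
      show ?thesis
        by (rule polyon_cong[OF polyon_coord[of "CPb b (j - N1)"]]) (use False ij in \<open>auto simp: coords_def mmQ_def\<close>)
    qed
    then show ?thesis using eq polyon_cong by (metis (no_types, lifting))
  qed
qed

definition bdl :: "nat \<Rightarrow> complex mat \<Rightarrow> complex mat" where
  "bdl d g = four_block_mat (1\<^sub>m d) (0\<^sub>m d (dim_row g)) (0\<^sub>m (dim_row g) d) g"

lemma bdl_carrier: "g \<in> carrier_mat N N \<Longrightarrow> bdl d g \<in> carrier_mat (d + N) (d + N)"
  unfolding bdl_def by auto

lemma bdl_mult:
  assumes "g \<in> carrier_mat N N" "h \<in> carrier_mat N N"
  shows "bdl d g * bdl d h = bdl d (g * h)"
  using assms unfolding bdl_def
  by (subst mult_four_block_mat[of _ d d _ N _ N _ _ d _ N]) (simp_all add: bdl_carrier)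

lemma bdl_one: "bdl d (1\<^sub>m N) = 1\<^sub>m (d + N)"
  unfolding bdl_def by simp

lemma mmap_equi1:
  assumes x1: "x1 \<in> Rep N1 K" and x2: "x2 \<in> Rep N2 K" and g: "g \<in> carrier_mat N1 N1" and h: "h \<in> carrier_mat N1 N1"
  shows "mmap N1 N2 K (act g h x1) x2 = act (bd N2 g) (bd N2 h) (mmap N1 N2 K x1 x2)"
proof -
  obtain B1 p1 q1 where e1: "x1 = (B1, p1, q1)" by (cases x1)
  obtain B2 p2 q2 where e2: "x2 = (B2, p2, q2)" by (cases x2)
  have B1: "B1 \<in> carrier_mat N1 N1" and p1: "p1 \<in> carrier_mat N1 K" and q1: "q1 \<in> carrier_mat K N1"
    using x1 e1 by (auto simp: Rep_def)
  have B2: "B2 \<in> carrier_mat N2 N2" and p2: "p2 \<in> carrier_mat N2 K" and q2: "q2 \<in> carrier_mat K N2"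
    using x2 e2 by (auto simp: Rep_def)
  have gd: "dim_row g = N1" "dim_row h = N1" using g h by auto
  have d: "dim_row B1 = N1" "dim_col B1 = N1" "dim_row p1 = N1" "dim_col p1 = K" "dim_row q1 = K" "dim_col q1 = N1"
     "dim_row B2 = N2" "dim_col B2 = N2" "dim_row p2 = N2" "dim_col p2 = K" "dim_row q2 = K" "dim_col q2 = N2"
    using B1 p1 q1 B2 p2 q2 by auto
  have P: "p1 * q2 \<in> carrier_mat N1 N2" and Q: "- (p2 * q1) \<in> carrier_mat N2 N1" using p1 q2 p2 q1 by auto
  have 1: "bd N2 g * four_block_mat B1 (p1 * q2) (- (p2 * q1)) B2
      = four_block_mat (g * B1) (g * (p1 * q2)) (- (p2 * q1)) B2"
    unfolding bd_def gd using g B1 P Q B2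
    by (subst mult_four_block_mat[of _ N1 N1 _ N2 _ N2 _ _ N1 _ N2]) (simp_all add: d)
  have 2: "four_block_mat (g * B1) (g * (p1 * q2)) (- (p2 * q1)) B2 * bd N2 h
      = four_block_mat (g * B1 * h) (g * (p1 * q2)) (- (p2 * q1) * h) B2"
    unfolding bd_def gd using g B1 P Q B2 h
    by (subst mult_four_block_mat[of _ N1 N1 _ N2 _ N2 _ _ N1 _ N2]) (simp_all add: d)
  have 3: "bd N2 g * four_block_mat p1 (0\<^sub>m N1 0) p2 (0\<^sub>m N2 0)
      = four_block_mat (g * p1) (0\<^sub>m N1 0) p2 (0\<^sub>m N2 0)"
    unfolding bd_def gd using g p1 p2
    by (subst mult_four_block_mat[of _ N1 N1 _ N2 _ N2 _ _ K _ 0]) simp_all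
  have 4: "four_block_mat q1 q2 (0\<^sub>m 0 N1) (0\<^sub>m 0 N2) * bd N2 h
      = four_block_mat (q1 * h) q2 (0\<^sub>m 0 N1) (0\<^sub>m 0 N2)"
    unfolding bd_def gd using h q1 q2
    by (subst mult_four_block_mat[of _ K N1 _ N2 _ 0 _ _ N1 _ N2]) simp_all
  have a1: "g * (p1 * q2) = (g * p1) * q2" using g p1 q2 by simp
  have a2: "- (p2 * q1) * h = - (p2 * (q1 * h))" using h p2 q1 by simp
  show ?thesis unfolding e1 e2 act.simps mmap.simps 1 3 4 unfolding 2 unfolding a1 a2 by (rule refl)
qed

lemma mmap_equi2:
  assumes x1: "x1 \<in> Rep N1 K" and x2: "x2 \<in> Rep N2 K" and g: "g \<in> carrier_mat N2 N2" and h: "h \<in> carrier_mat N2 N2"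
  shows "mmap N1 N2 K x1 (act g h x2) = act (bdl N1 g) (bdl N1 h) (mmap N1 N2 K x1 x2)"
proof -
  obtain B1 p1 q1 where e1: "x1 = (B1, p1, q1)" by (cases x1)
  obtain B2 p2 q2 where e2: "x2 = (B2, p2, q2)" by (cases x2)
  have B1: "B1 \<in> carrier_mat N1 N1" and p1: "p1 \<in> carrier_mat N1 K" and q1: "q1 \<in> carrier_mat K N1"
    using x1 e1 by (auto simp: Rep_def)
  have B2: "B2 \<in> carrier_mat N2 N2" and p2: "p2 \<in> carrier_mat N2 K" and q2: "q2 \<in> carrier_mat K N2"
    using x2 e2 by (auto simp: Rep_def)
  have gd: "dim_row g = N2" "dim_row h = N2" using g h by auto
  have d: "dim_row B1 = N1" "dim_col B1 = N1" "dim_row p1 = N1" "dim_col p1 = K" "dim_row q1 = K" "dim_col q1 = N1"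
     "dim_row B2 = N2" "dim_col B2 = N2" "dim_row p2 = N2" "dim_col p2 = K" "dim_row q2 = K" "dim_col q2 = N2"
    using B1 p1 q1 B2 p2 q2 by auto
  have P: "p1 * q2 \<in> carrier_mat N1 N2" and Q: "- (p2 * q1) \<in> carrier_mat N2 N1" using p1 q2 p2 q1 by auto
  have 1: "bdl N1 g * four_block_mat B1 (p1 * q2) (- (p2 * q1)) B2
      = four_block_mat B1 (p1 * q2) (g * - (p2 * q1)) (g * B2)"
    unfolding bdl_def gd using g B1 P Q B2
    by (subst mult_four_block_mat[of _ N1 N1 _ N2 _ N2 _ _ N1 _ N2]) (simp_all add: d)
  have 2: "four_block_mat B1 (p1 * q2) (g * - (p2 * q1)) (g * B2) * bdl N1 h
      = four_block_mat B1 (p1 * q2 * h) (g * - (p2 * q1)) (g * B2 * h)"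
    unfolding bdl_def gd using g B1 P Q B2 h
    by (subst mult_four_block_mat[of _ N1 N1 _ N2 _ N2 _ _ N1 _ N2]) (simp_all add: d)
  have 3: "bdl N1 g * four_block_mat p1 (0\<^sub>m N1 0) p2 (0\<^sub>m N2 0)
      = four_block_mat p1 (0\<^sub>m N1 0) (g * p2) (0\<^sub>m N2 0)"
    unfolding bdl_def gd using g p1 p2
    by (subst mult_four_block_mat[of _ N1 N1 _ N2 _ N2 _ _ K _ 0]) simp_all
  have 4: "four_block_mat q1 q2 (0\<^sub>m 0 N1) (0\<^sub>m 0 N2) * bdl N1 h
      = four_block_mat q1 (q2 * h) (0\<^sub>m 0 N1) (0\<^sub>m 0 N2)"
    unfolding bdl_def gd using h q1 q2
    by (subst mult_four_block_mat[of _ K N1 _ N2 _ 0 _ _ N1 _ N2]) simp_all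
  have a1: "p1 * q2 * h = p1 * (q2 * h)" using h p1 q2 by simp
  have a2: "g * - (p2 * q1) = - (g * p2 * q1)" using g p2 q1 by simp
  show ?thesis unfolding e1 e2 act.simps mmap.simps 1 3 4 unfolding 2 unfolding a1 a2 by (rule refl)
qed

lemma mmap_respects1:
  assumes x2: "x2 \<in> Rep N2 K" and xy: "(x, y) \<in> qrel N1 K"
  shows "(mmap N1 N2 K x x2, mmap N1 N2 K y x2) \<in> qrel (N1 + N2) K"
proof (rule respects[OF _ _ _ xy])
  show "\<And>x. x \<in> Rep N1 K \<Longrightarrow> mmap N1 N2 K x x2 \<in> Rep (N1 + N2) K" using mmap_Rep x2 by blast
  show "\<And>c. c \<in> coords (N1 + N2) K \<Longrightarrow> polyon N1 K (\<lambda>x. coordval c (mmap N1 N2 K x x2))"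
    using mmap_poly1 x2 by blast
  fix x and g h :: "complex mat"
  assume x: "x \<in> Rep N1 K" and g: "g \<in> carrier_mat N1 N1" and h: "h \<in> carrier_mat N1 N1" and gh: "g * h = 1\<^sub>m N1"
  show "\<exists>g' h'. g' \<in> carrier_mat (N1 + N2) (N1 + N2) \<and> h' \<in> carrier_mat (N1 + N2) (N1 + N2) \<and> g' * h' = 1\<^sub>m (N1 + N2)
             \<and> mmap N1 N2 K (act g h x) x2 = act g' h' (mmap N1 N2 K x x2)"
    apply (rule exI[of _ "bd N2 g"], rule exI[of _ "bd N2 h"])
    using bd_carrier[OF g, of N2] bd_carrier[OF h, of N2] bd_mult[OF g h, of N2]
      bd_one[of N2 N1] mmap_equi1[OF x x2 g h] unfolding gh by simp
qed

lemma mmap_respects2: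
  assumes x1: "x1 \<in> Rep N1 K" and xy: "(x, y) \<in> qrel N2 K"
  shows "(mmap N1 N2 K x1 x, mmap N1 N2 K x1 y) \<in> qrel (N1 + N2) K"
proof (rule respects[OF _ _ _ xy])
  show "\<And>x. x \<in> Rep N2 K \<Longrightarrow> mmap N1 N2 K x1 x \<in> Rep (N1 + N2) K" using mmap_Rep x1 by blast
  show "\<And>c. c \<in> coords (N1 + N2) K \<Longrightarrow> polyon N2 K (\<lambda>x. coordval c (mmap N1 N2 K x1 x))"
    using mmap_poly2 x1 by blast
  fix x and g h :: "complex mat"
  assume x: "x \<in> Rep N2 K" and g: "g \<in> carrier_mat N2 N2" and h: "h \<in> carrier_mat N2 N2" and gh: "g * h = 1\<^sub>m N2"
  show "\<exists>g' h'. g' \<in> carrier_mat (N1 + N2) (N1 + N2) \<and> h' \<in> carrier_mat (N1 + N2) (N1 + N2) \<and> g' * h' = 1\<^sub>m (N1 + N2)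
             \<and> mmap N1 N2 K x1 (act g h x) = act g' h' (mmap N1 N2 K x1 x)"
    apply (rule exI[of _ "bdl N1 g"], rule exI[of _ "bdl N1 h"])
    using bdl_carrier[OF g, of N1] bdl_carrier[OF h, of N1] bdl_mult[OF g h, of N1]
      bdl_one[of N1 N2] mmap_equi2[OF x1 x g h] unfolding gh by simp
qed

lemma act_qrel:
  assumes "x \<in> Rep N K" "g \<in> carrier_mat N N" "h \<in> carrier_mat N N" "g * h = 1\<^sub>m N"
  shows "(x, act g h x) \<in> qrel N K"
  using assms act_Rep[OF assms(1-3)] unfolding qrel_def invpoly_def by auto

definition pm :: "nat \<Rightarrow> (nat \<Rightarrow> nat) \<Rightarrow> complex mat" where
  "pm n \<sigma> = mat n n (\<lambda>(i, k). if \<sigma> i = k then 1 else 0)"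

definition pmt :: "nat \<Rightarrow> (nat \<Rightarrow> nat) \<Rightarrow> complex mat" where
  "pmt n \<sigma> = mat n n (\<lambda>(k, j). if \<sigma> j = k then 1 else 0)"

lemma pm_left:
  assumes M: "M \<in> carrier_mat n m" and s: "\<And>i. i < n \<Longrightarrow> \<sigma> i < n" and i: "i < n" and j: "j < m"
  shows "(pm n \<sigma> * M) $$ (i, j) = M $$ (\<sigma> i, j)"
proof -
  have "(pm n \<sigma> * M) $$ (i, j) = (\<Sum>k<n. pm n \<sigma> $$ (i, k) * M $$ (k, j))"
    by (rule mult_idx[OF _ M i j]) (simp add: pm_def)
  also have "\<dots> = (\<Sum>k<n. if \<sigma> i = k then M $$ (k, j) else 0)"
    by (rule sum.cong) (auto simp: pm_def i)
  also have "\<dots> = M $$ (\<sigma> i, j)" using s[OF i] by (simp add: sum.delta)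
  finally show ?thesis .
qed

lemma pmt_right:
  assumes M: "M \<in> carrier_mat m n" and s: "\<And>i. i < n \<Longrightarrow> \<sigma> i < n" and i: "i < m" and j: "j < n"
  shows "(M * pmt n \<sigma>) $$ (i, j) = M $$ (i, \<sigma> j)"
proof -
  have "(M * pmt n \<sigma>) $$ (i, j) = (\<Sum>k<n. M $$ (i, k) * pmt n \<sigma> $$ (k, j))"
    by (rule mult_idx[OF M _ i j]) (simp add: pmt_def)
  also have "\<dots> = (\<Sum>k<n. if \<sigma> j = k then M $$ (i, k) else 0)"
    by (rule sum.cong) (auto simp: pmt_def j)
  also have "\<dots> = M $$ (i, \<sigma> j)" using s[OF j] by (simp add: sum.delta)
  finally show ?thesis .
qed

lemma pm_pmt:
  assumes s: "\<And>i. i < n \<Longrightarrow> \<sigma> i < n" and inj: "inj_on \<sigma> {..<n}"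
  shows "pm n \<sigma> * pmt n \<sigma> = 1\<^sub>m n"
proof (rule eq_matI)
  fix i j assume i: "i < dim_row (1\<^sub>m n :: complex mat)" and j: "j < dim_col (1\<^sub>m n :: complex mat)"
  then have i': "i < n" and j': "j < n" by auto
  have "(pm n \<sigma> * pmt n \<sigma>) $$ (i, j) = pmt n \<sigma> $$ (\<sigma> i, j)"
    by (rule pm_left[OF _ s i' j']) (simp add: pmt_def)
  also have "\<dots> = (if i = j then 1 else 0)" using s[OF i'] j' i' inj unfolding inj_on_def
    by (auto simp: pmt_def)
  finally show "(pm n \<sigma> * pmt n \<sigma>) $$ (i, j) = 1\<^sub>m n $$ (i, j)" using i' j' by simp
qed (auto simp: pm_def pmt_def)




lemma sum_mat_idx:
  assumes "i < r" "j < c"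
  shows "(\<Sum>a<K. mat r K f $$ (i, a) * mat K c g $$ (a, j)) = (\<Sum>a<K. f (i, a) * g (a, j))"
  using assms by (intro sum.cong) auto

lemma extr_Rep: "x \<in> Rep N K \<Longrightarrow> N \<le> N' \<Longrightarrow> extr N N' K x \<in> Rep N' K"
  using iota_Rep iota_extr by metis

lemma mmap_iota_perm:
  assumes x1: "x1 \<in> Rep N1 K" and x2: "x2 \<in> Rep N2 K" and n1: "N1 \<le> N1'" and n2: "N2 \<le> N2'"
  defines "\<sigma> \<equiv> (\<lambda>i::nat. if i < N1 then i else if i < N1' then i + N2 else if i < N1' + N2 then i - (N1' - N1) else i)"
  shows "mmap N1' N2' K (iota N1 N1' K x1) (iota N2 N2' K x2)
     = act (pm (N1' + N2') \<sigma>) (pmt (N1' + N2') \<sigma>) (iota (N1 + N2) (N1' + N2') K (mmap N1 N2 K x1 x2))"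
proof -
  define n where "n = N1' + N2'"
  obtain B1 p1 q1 where e1: "x1 = (B1, p1, q1)" by (cases x1)
  obtain B2 p2 q2 where e2: "x2 = (B2, p2, q2)" by (cases x2)
  have s: "\<And>i. i < n \<Longrightarrow> \<sigma> i < n" unfolding \<sigma>_def n_def using n1 n2 by auto
  have nn: "N1 + N2 \<le> N1' + N2'" using n1 n2 by simp
  have L: "mmap N1' N2' K (iota N1 N1' K x1) (iota N2 N2' K x2)
     = mmap N1' N2' K (extr N1 N1' K x1) (extr N2 N2' K x2)"
    using x1 x2 n1 n2 by (simp add: iota_extr)
  have R: "iota (N1 + N2) (N1' + N2') K (mmap N1 N2 K x1 x2) = extr (N1 + N2) (N1' + N2') K (mmap N1 N2 K x1 x2)"
    using mmap_Rep[OF x1 x2] nn by (simp add: iota_extr)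
  let ?M = "mat n n (\<lambda>(i, j). if i < N1 + N2 \<and> j < N1 + N2 then mmB N1 K x1 x2 i j else 0)"
  let ?P = "mat n K (\<lambda>(i, a). if i < N1 + N2 then mmP N1 x1 x2 i a else 0)"
  let ?Q = "mat K n (\<lambda>(b, j). if j < N1 + N2 then mmQ N1 x1 x2 b j else 0)"
  have R2: "extr (N1 + N2) (N1' + N2') K (mmap N1 N2 K x1 x2) = (?M, ?P, ?Q)"
  proof -
    have a: "mat n n (\<lambda>(i, j). if i < N1 + N2 \<and> j < N1 + N2 then mat (N1 + N2) (N1 + N2) (\<lambda>(i, j). mmB N1 K x1 x2 i j) $$ (i, j) else 0) = ?M"
      by (rule eq_matI) simp_all
    have b: "mat n K (\<lambda>(i, a). if i < N1 + N2 then mat (N1 + N2) K (\<lambda>(i, a). mmP N1 x1 x2 i a) $$ (i, a) else 0) = ?P"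
      by (rule eq_matI) simp_all
    have c: "mat K n (\<lambda>(b, j). if j < N1 + N2 then mat K (N1 + N2) (\<lambda>(b, j). mmQ N1 x1 x2 b j) $$ (b, j) else 0) = ?Q"
      by (rule eq_matI) simp_all
    show ?thesis unfolding mmap_mat[OF x1 x2] extr_def n_def[symmetric] using a b c by simp
  qed
  have L2: "mmap N1' N2' K (extr N1 N1' K x1) (extr N2 N2' K x2) =
    (mat n n (\<lambda>(i, j). mmB N1' K (extr N1 N1' K x1) (extr N2 N2' K x2) i j),
     mat n K (\<lambda>(i, a). mmP N1' (extr N1 N1' K x1) (extr N2 N2' K x2) i a),
     mat K n (\<lambda>(b, j). mmQ N1' (extr N1 N1' K x1) (extr N2 N2' K x2) b j))"
    unfolding n_def by (rule mmap_mat[OF extr_Rep[OF x1 n1] extr_Rep[OF x2 n2]])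
  have regs: "\<And>i. (i < N1 \<and> i < N1' \<and> \<sigma> i = i)
     \<or> (\<not> i < N1 \<and> i < N1' \<and> \<sigma> i = i + N2 \<and> \<not> \<sigma> i < N1 + N2)
     \<or> (\<not> i < N1 \<and> \<not> i < N1' \<and> i - N1' < N2 \<and> \<not> \<sigma> i < N1 \<and> \<sigma> i < N1 + N2 \<and> \<sigma> i - N1 = i - N1')
     \<or> (\<not> i < N1 \<and> \<not> i < N1' \<and> \<not> i - N1' < N2 \<and> \<sigma> i = i \<and> \<not> \<sigma> i < N1 + N2)"
    unfolding \<sigma>_def using n1 by auto
  have lhsB: "mmB N1' K (extr N1 N1' K x1) (extr N2 N2' K x2) i j =
     (if i < N1' then if j < N1' then (if i < N1 \<and> j < N1 then B1 $$ (i, j) else 0)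
        else (if i < N1 \<and> j - N1' < N2 then (\<Sum>a<K. p1 $$ (i, a) * q2 $$ (a, j - N1')) else 0)
      else if j < N1' then (if i - N1' < N2 \<and> j < N1 then - (\<Sum>a<K. p2 $$ (i - N1', a) * q1 $$ (a, j)) else 0)
      else (if i - N1' < N2 \<and> j - N1' < N2 then B2 $$ (i - N1', j - N1') else 0))"
    if "i < n" "j < n" for i j
    using that unfolding n_def
    by (cases "i < N1"; cases "j < N1"; cases "i - N1' < N2"; cases "j - N1' < N2"; simp add: mmB_def extr_def e1 e2 sum_mat_idx)
  have "i < n \<Longrightarrow> j < n \<Longrightarrow> i < N1 \<Longrightarrow> \<not> j < N1' \<Longrightarrow> j - N1' < N2 \<Longrightarrow> mmB N1' K (extr N1 N1' K x1) (extr N2 N2' K x2) i j = (\<Sum>a<K. p1 $$ (i, a) * q2 $$ (a, j - N1'))" for i j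
    unfolding n_def using n1 by (simp add: mmB_def extr_def e1 e2 sum_mat_idx)

  have B: "mat n n (\<lambda>(i, j). mmB N1' K (extr N1 N1' K x1) (extr N2 N2' K x2) i j) = pm n \<sigma> * ?M * pmt n \<sigma>"
  proof (rule eq_matI)
    fix i j assume "i < dim_row (pm n \<sigma> * ?M * pmt n \<sigma>)" "j < dim_col (pm n \<sigma> * ?M * pmt n \<sigma>)"
    then have i: "i < n" and j: "j < n" by (simp_all add: pm_def pmt_def)
    have "(pm n \<sigma> * ?M * pmt n \<sigma>) $$ (i, j) = (pm n \<sigma> * ?M) $$ (i, \<sigma> j)"
      by (rule pmt_right[OF _ s i j]) (rule mult_carrier_mat[of _ n n], simp_all add: pm_def)
    also have "\<dots> = ?M $$ (\<sigma> i, \<sigma> j)"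
      by (rule pm_left[OF _ s i s[OF j]]) simp
    finally have r: "(pm n \<sigma> * ?M * pmt n \<sigma>) $$ (i, j) = ?M $$ (\<sigma> i, \<sigma> j)" .
    show "mat n n (\<lambda>(i, j). mmB N1' K (extr N1 N1' K x1) (extr N2 N2' K x2) i j) $$ (i, j) = (pm n \<sigma> * ?M * pmt n \<sigma>) $$ (i, j)"
      unfolding r index_mat(1)[OF i j] index_mat(1)[OF s[OF i] s[OF j]] prod.case lhsB[OF i j]
      using regs[of i] regs[of j] n1 n2 by (elim disjE; simp add: mmB_def e1 e2)
  qed (simp_all add: pm_def pmt_def)
  have P: "mat n K (\<lambda>(i, a). mmP N1' (extr N1 N1' K x1) (extr N2 N2' K x2) i a) = pm n \<sigma> * ?P"
  proof (rule eq_matI)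
    fix i a assume "i < dim_row (pm n \<sigma> * ?P)" "a < dim_col (pm n \<sigma> * ?P)"
    then have i: "i < n" and a: "a < K" by (simp_all add: pm_def)
    then have "\<not> i < N1' \<longrightarrow> i - N1' < N2'" unfolding n_def by arith
    have r: "(pm n \<sigma> * ?P) $$ (i, a) = ?P $$ (\<sigma> i, a)"
      by (rule pm_left[OF _ s i a]) simp
    show "mat n K (\<lambda>(i, a). mmP N1' (extr N1 N1' K x1) (extr N2 N2' K x2) i a) $$ (i, a) = (pm n \<sigma> * ?P) $$ (i, a)"
      unfolding r index_mat(1)[OF i a] index_mat(1)[OF s[OF i] a] prod.case
      using regs[of i] n1 n2 i a \<open>\<not> i < N1' \<longrightarrow> i - N1' < N2'\<close> unfolding n_def by (elim disjE; simp add: mmP_def extr_def e1 e2)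
  qed (simp_all add: pm_def)
  have Q: "mat K n (\<lambda>(b, j). mmQ N1' (extr N1 N1' K x1) (extr N2 N2' K x2) b j) = ?Q * pmt n \<sigma>"
  proof (rule eq_matI)
    fix b j assume "b < dim_row (?Q * pmt n \<sigma>)" "j < dim_col (?Q * pmt n \<sigma>)"
    then have b: "b < K" and j: "j < n" by (simp_all add: pmt_def)
    then have "\<not> j < N1' \<longrightarrow> j - N1' < N2'" unfolding n_def by arith
    have r: "(?Q * pmt n \<sigma>) $$ (b, j) = ?Q $$ (b, \<sigma> j)"
      by (rule pmt_right[OF _ s b j]) simp
    show "mat K n (\<lambda>(b, j). mmQ N1' (extr N1 N1' K x1) (extr N2 N2' K x2) b j) $$ (b, j) = (?Q * pmt n \<sigma>) $$ (b, j)"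
      unfolding r index_mat(1)[OF b j] index_mat(1)[OF b s[OF j]] prod.case
      using regs[of j] n1 n2 b j \<open>\<not> j < N1' \<longrightarrow> j - N1' < N2'\<close> unfolding n_def by (elim disjE; simp add: mmQ_def extr_def e1 e2)
  qed (simp_all add: pmt_def)
  show ?thesis unfolding L R unfolding R2 L2 unfolding act.simps n_def[symmetric] B P Q by (rule refl)
qed


lemma part3:
  assumes n1: "N1 \<le> N1'" and n2: "N2 \<le> N2'" and X1: "X1 \<in> Mq N1 K" and X2: "X2 \<in> Mq N2 K"
  shows "qmap2 (N1' + N2') K (mmap N1' N2' K)
                (qmap N1' K (iota N1 N1' K) X1) (qmap N2' K (iota N2 N2' K) X2)
        = qmap (N1' + N2') K (iota (N1 + N2) (N1' + N2') K)
                (qmap2 (N1 + N2) K (mmap N1 N2 K) X1 X2)"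
proof -
  define x1 where "x1 = (SOME x. x \<in> X1)"
  define x2 where "x2 = (SOME x. x \<in> X2)"
  have x1: "x1 \<in> Rep N1 K" using Mq_some[OF X1] x1_def by auto
  have x2: "x2 \<in> Rep N2 K" using Mq_some[OF X2] x2_def by auto
  define y1 where "y1 = (SOME y. y \<in> qrel N1' K `` {iota N1 N1' K x1})"
  define y2 where "y2 = (SOME y. y \<in> qrel N2' K `` {iota N2 N2' K x2})"
  have ix1: "iota N1 N1' K x1 \<in> Rep N1' K" using iota_Rep x1 n1 by auto
  have ix2: "iota N2 N2' K x2 \<in> Rep N2' K" using iota_Rep x2 n2 by auto
  have y1: "(iota N1 N1' K x1, y1) \<in> qrel N1' K" using class_some[OF ix1] y1_def by simp
  have y2: "(iota N2 N2' K x2, y2) \<in> qrel N2' K" using class_some[OF ix2] y2_def by simp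
  have y2R: "y2 \<in> Rep N2' K" using y2 by (auto simp: qrel_def)
  define z where "z = (SOME y. y \<in> qrel (N1 + N2) K `` {mmap N1 N2 K x1 x2})"
  have mx: "mmap N1 N2 K x1 x2 \<in> Rep (N1 + N2) K" using mmap_Rep x1 x2 by auto
  have z: "(mmap N1 N2 K x1 x2, z) \<in> qrel (N1 + N2) K" using class_some[OF mx] z_def by simp
  have LHS: "qmap2 (N1' + N2') K (mmap N1' N2' K)
                (qmap N1' K (iota N1 N1' K) X1) (qmap N2' K (iota N2 N2' K) X2)
     = qrel (N1' + N2') K `` {mmap N1' N2' K y1 y2}"
    unfolding qmap2_def qmap_def x1_def[symmetric] x2_def[symmetric] y1_def[symmetric] y2_def[symmetric] ..
  have RHS: "qmap (N1' + N2') K (iota (N1 + N2) (N1' + N2') K) (qmap2 (N1 + N2) K (mmap N1 N2 K) X1 X2)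
     = qrel (N1' + N2') K `` {iota (N1 + N2) (N1' + N2') K z}"
    unfolding qmap2_def qmap_def x1_def[symmetric] x2_def[symmetric] z_def[symmetric] ..
  have a: "(mmap N1' N2' K y1 y2, mmap N1' N2' K (iota N1 N1' K x1) y2) \<in> qrel (N1' + N2') K"
    using mmap_respects1[OF y2R y1] qrel_sym by blast
  have b: "(mmap N1' N2' K (iota N1 N1' K x1) y2, mmap N1' N2' K (iota N1 N1' K x1) (iota N2 N2' K x2)) \<in> qrel (N1' + N2') K"
    using mmap_respects2[OF ix1 y2] qrel_sym by blast
  define n where "n = N1' + N2'"
  define \<sigma> where "\<sigma> = (\<lambda>i::nat. if i < N1 then i else if i < N1' then i + N2 else if i < N1' + N2 then i - (N1' - N1) else i)"
  have s: "\<And>i. i < n \<Longrightarrow> \<sigma> i < n" unfolding \<sigma>_def n_def using n1 n2 by auto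
  have inj: "inj_on \<sigma> {..<n}" unfolding inj_on_def \<sigma>_def using n1 n2 by auto
  have im: "(iota (N1 + N2) n K (mmap N1 N2 K x1 x2)) \<in> Rep n K"
    using iota_Rep[OF mx] n1 n2 unfolding n_def by simp
  have c: "(iota (N1 + N2) n K (mmap N1 N2 K x1 x2), mmap N1' N2' K (iota N1 N1' K x1) (iota N2 N2' K x2)) \<in> qrel n K"
    unfolding mmap_iota_perm[OF x1 x2 n1 n2] \<sigma>_def[symmetric] n_def[symmetric]
    by (rule act_qrel[OF im _ _ pm_pmt[OF s inj]]) (simp_all add: pm_def pmt_def)
  have d: "(iota (N1 + N2) n K (mmap N1 N2 K x1 x2), iota (N1 + N2) n K z) \<in> qrel n K"
    using iota_respects[OF _ z] n1 n2 unfolding n_def by simp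
  have "(mmap N1' N2' K y1 y2, iota (N1 + N2) (N1' + N2') K z) \<in> qrel (N1' + N2') K"
    using a b c d qrel_sym qrel_trans unfolding n_def by metis
  then show ?thesis unfolding LHS RHS by (rule qrel_class_eq)
qed



lemma add_emat_carrier: "A \<in> carrier_mat n m \<Longrightarrow> A + t \<cdot>\<^sub>m emat (dim_row A) (dim_col A) i j \<in> carrier_mat n m"
proof -
  assume A: "A \<in> carrier_mat n m"
  then have d: "dim_row A = n" "dim_col A = m" by auto
  show ?thesis unfolding d emat_def by simp
qed

lemma bump_Rep: "x \<in> Rep N K \<Longrightarrow> bump x c t \<in> Rep N K"
  by (cases x; cases c) (simp_all add: Rep_def add_emat_carrier)

lemma coords_mem[simp]:
  "CB i j \<in> coords N K \<longleftrightarrow> i < N \<and> j < N"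
  "CP i a \<in> coords N K \<longleftrightarrow> i < N \<and> a < K"
  "CPb b j \<in> coords N K \<longleftrightarrow> b < K \<and> j < N"
  by (auto simp: coords_def)

lemma coordval_bump:
  assumes x: "x \<in> Rep N K" and c: "c \<in> coords N K" and c': "c' \<in> coords N K"
  shows "coordval c' (bump x c t) = coordval c' x + (if c' = c then t else 0)"
proof -
  obtain B p q where e: "x = (B, p, q)" by (cases x)
  have d: "dim_row B = N" "dim_col B = N" "dim_row p = N" "dim_col p = K" "dim_row q = K" "dim_col q = N"
    using x e by (auto simp: Rep_def)
  show ?thesis using c c' unfolding e
    by (cases c; cases c'; simp add: emat_def d)
qed

lemma deriv_exists:
  assumes f: "f \<in> polyfun N K" and x: "x \<in> Rep N K" and c: "c \<in> coords N K"
  shows "\<exists>D. ((\<lambda>t. f (bump x c t)) has_field_derivative D) (at 0)"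
  using f
proof (induction rule: polyfun.induct)
  case (pf_const a)
  then show ?case using DERIV_const by blast
next
  case (pf_coord c')
  have e: "(\<lambda>t. coordval c' (bump x c t)) = (\<lambda>t. coordval c' x + (if c' = c then t else 0))"
    using coordval_bump[OF x c pf_coord] by simp
  show ?case
  proof (cases "c' = c")
    case True
    then show ?thesis unfolding e by (auto intro!: derivative_eq_intros)
  next
    case False
    then show ?thesis unfolding e by (auto intro!: derivative_eq_intros)
  qed
next
  case (pf_add f g)
  then show ?case using DERIV_add by blast
next
  case (pf_mult f g)
  then show ?case using DERIV_mult by blast
qed

lemma pd_deriv:
  assumes f: "f \<in> polyfun N K" and x: "x \<in> Rep N K" and c: "c \<in> coords N K"
  shows "((\<lambda>t. f (bump x c t)) has_field_derivative pd f c x) (at 0)"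
  unfolding pd_def using deriv_exists[OF assms] by (rule someI_ex)

lemma pd_zero:
  assumes f: "f \<in> polyfun N K" and x: "x \<in> Rep N K" and c: "c \<in> coords N K"
    and w: "w \<noteq> 1" and inv: "\<And>t. f (bump x c (w * t)) = f (bump x c t)"
  shows "pd f c x = 0"
proof -
  let ?D = "pd f c x"
  have d: "((\<lambda>t. f (bump x c t)) has_field_derivative ?D) (at 0)" by (rule pd_deriv[OF f x c])
  have d0: "((\<lambda>t. f (bump x c t)) has_field_derivative ?D) (at (w * 0))" using d by simp
  have "((\<lambda>t. f (bump x c (w * t))) has_field_derivative ?D * w) (at 0)"
  proof (rule DERIV_chain2[where f="\<lambda>t. f (bump x c t)" and g="\<lambda>t. w * t"])
    show "((\<lambda>t. f (bump x c t)) has_field_derivative ?D) (at (w * 0))" by (rule d0)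
    show "((\<lambda>t. w * t) has_field_derivative w) (at 0)" by (auto intro!: derivative_eq_intros)
  qed
  then have "((\<lambda>t. f (bump x c t)) has_field_derivative ?D * w) (at 0)" using inv by simp
  then have "?D * w = ?D" using d DERIV_unique by blast
  then have "?D * (w - 1) = 0" by (simp add: algebra_simps)
  then show ?thesis using w by simp
qed

definition dm :: "nat \<Rightarrow> (nat \<Rightarrow> complex) \<Rightarrow> complex mat" where
  "dm n d = mat n n (\<lambda>(i, j). if i = j then d i else 0)"

lemma dm_carrier[simp]: "dm n d \<in> carrier_mat n n"
  by (simp add: dm_def)

lemma dm_left:
  assumes M: "M \<in> carrier_mat n m" and i: "i < n" and j: "j < m"
  shows "(dm n d * M) $$ (i, j) = d i * M $$ (i, j)"
proof -
  have "(dm n d * M) $$ (i, j) = (\<Sum>k<n. dm n d $$ (i, k) * M $$ (k, j))"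
    by (rule mult_idx[OF dm_carrier M i j])
  also have "\<dots> = (\<Sum>k<n. if i = k then d i * M $$ (k, j) else 0)"
    by (rule sum.cong) (auto simp: dm_def i)
  also have "\<dots> = d i * M $$ (i, j)" using i by (simp add: sum.delta)
  finally show ?thesis .
qed

lemma dm_right:
  assumes M: "M \<in> carrier_mat m n" and i: "i < m" and j: "j < n"
  shows "(M * dm n d) $$ (i, j) = M $$ (i, j) * d j"
proof -
  have "(M * dm n d) $$ (i, j) = (\<Sum>k<n. M $$ (i, k) * dm n d $$ (k, j))"
    by (rule mult_idx[OF M dm_carrier i j])
  also have "\<dots> = (\<Sum>k<n. if j = k then M $$ (i, k) * d j else 0)"
    by (rule sum.cong) (auto simp: dm_def j)
  also have "\<dots> = M $$ (i, j) * d j" using j by (simp add: sum.delta)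
  finally show ?thesis .
qed

lemma dm_one:
  assumes "\<And>k. d k * e k = 1"
  shows "dm n d * dm n e = 1\<^sub>m n"
proof (rule eq_matI)
  fix i j assume "i < dim_row (1\<^sub>m n :: complex mat)" "j < dim_col (1\<^sub>m n :: complex mat)"
  then have i: "i < n" and j: "j < n" by simp_all
  show "(dm n d * dm n e) $$ (i, j) = 1\<^sub>m n $$ (i, j)"
    unfolding dm_left[OF dm_carrier i j] using i j assms by (simp add: dm_def)
qed (simp_all add: dm_def)

definition dd :: "nat \<Rightarrow> nat \<Rightarrow> complex" where "dd r k = (if k = r then 2 else 1)"
definition de :: "nat \<Rightarrow> nat \<Rightarrow> complex" where "de r k = (if k = r then 1 / 2 else 1)"

lemma dd_de: "dd r k * de r k = 1" by (simp add: dd_def de_def)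

lemma dm_left_id:
  assumes M: "M \<in> carrier_mat n m" and z: "\<And>j. j < m \<Longrightarrow> M $$ (r, j) = 0"
  shows "dm n (dd r) * M = M"
proof (rule eq_matI)
  fix i j assume "i < dim_row M" "j < dim_col M"
  then have i: "i < n" and j: "j < m" using M by auto
  show "(dm n (dd r) * M) $$ (i, j) = M $$ (i, j)"
    unfolding dm_left[OF M i j] using z[OF j] by (cases "i = r") (simp_all add: dd_def)
qed (use M in \<open>simp_all add: dm_def\<close>)

lemma dm_right_id:
  assumes M: "M \<in> carrier_mat m n" and z: "\<And>i. i < m \<Longrightarrow> M $$ (i, r) = 0"
  shows "M * dm n (de r) = M"
proof (rule eq_matI)
  fix i j assume "i < dim_row M" "j < dim_col M"
  then have i: "i < m" and j: "j < n" using M by auto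
  show "(M * dm n (de r)) $$ (i, j) = M $$ (i, j)"
    unfolding dm_right[OF M i j] using z[OF i] by (cases "j = r") (simp_all add: de_def)
qed (use M in \<open>simp_all add: dm_def\<close>)

lemma dm_both:
  assumes B: "B \<in> carrier_mat n n" and z1: "\<And>j. j < n \<Longrightarrow> B $$ (r, j) = 0"
    and z2: "\<And>i. i < n \<Longrightarrow> B $$ (i, r) = 0"
  shows "dm n (dd r) * (B + t \<cdot>\<^sub>m emat n n m l) * dm n (de r) = B + (dd r m * de r l * t) \<cdot>\<^sub>m emat n n m l"
proof (rule eq_matI)
  have X: "B + t \<cdot>\<^sub>m emat n n m l \<in> carrier_mat n n" using B by (simp add: emat_def)
  fix i j assume "i < dim_row (B + (dd r m * de r l * t) \<cdot>\<^sub>m emat n n m l)"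
    "j < dim_col (B + (dd r m * de r l * t) \<cdot>\<^sub>m emat n n m l)"
  then have i: "i < n" and j: "j < n" by (simp_all add: emat_def)
  have "(dm n (dd r) * (B + t \<cdot>\<^sub>m emat n n m l) * dm n (de r)) $$ (i, j)
      = dd r i * (B + t \<cdot>\<^sub>m emat n n m l) $$ (i, j) * de r j"
    unfolding dm_right[OF mult_carrier_mat[OF dm_carrier X] i j] dm_left[OF X i j] ..
  also have "\<dots> = (B + (dd r m * de r l * t) \<cdot>\<^sub>m emat n n m l) $$ (i, j)"
    using i j B z1[OF j] z2[OF i]
    by (cases "i = r"; cases "j = r"; simp add: emat_def dd_def de_def)
  finally show "(dm n (dd r) * (B + t \<cdot>\<^sub>m emat n n m l) * dm n (de r)) $$ (i, j)
      = (B + (dd r m * de r l * t) \<cdot>\<^sub>m emat n n m l) $$ (i, j)" .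
qed (simp_all add: dm_def emat_def)

lemma dm_left_bump:
  assumes p: "p \<in> carrier_mat n m" and z: "\<And>j. j < m \<Longrightarrow> p $$ (r, j) = 0"
  shows "dm n (dd r) * (p + t \<cdot>\<^sub>m emat n m i a) = p + (dd r i * t) \<cdot>\<^sub>m emat n m i a"
proof (rule eq_matI)
  have X: "p + t \<cdot>\<^sub>m emat n m i a \<in> carrier_mat n m" using p by (simp add: emat_def)
  fix k l assume "k < dim_row (p + (dd r i * t) \<cdot>\<^sub>m emat n m i a)" "l < dim_col (p + (dd r i * t) \<cdot>\<^sub>m emat n m i a)"
  then have k: "k < n" and l: "l < m" by (simp_all add: emat_def)
  show "(dm n (dd r) * (p + t \<cdot>\<^sub>m emat n m i a)) $$ (k, l) = (p + (dd r i * t) \<cdot>\<^sub>m emat n m i a) $$ (k, l)"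
    unfolding dm_left[OF X k l] using k l p z[OF l]
    by (cases "k = r"; simp add: emat_def dd_def)
qed (simp_all add: dm_def emat_def)

lemma dm_right_bump:
  assumes q: "q \<in> carrier_mat m n" and z: "\<And>i. i < m \<Longrightarrow> q $$ (i, r) = 0"
  shows "(q + t \<cdot>\<^sub>m emat m n b j) * dm n (de r) = q + (de r j * t) \<cdot>\<^sub>m emat m n b j"
proof (rule eq_matI)
  have X: "q + t \<cdot>\<^sub>m emat m n b j \<in> carrier_mat m n" using q by (simp add: emat_def)
  fix k l assume "k < dim_row (q + (de r j * t) \<cdot>\<^sub>m emat m n b j)" "l < dim_col (q + (de r j * t) \<cdot>\<^sub>m emat m n b j)"
  then have k: "k < m" and l: "l < n" by (simp_all add: emat_def)
  show "((q + t \<cdot>\<^sub>m emat m n b j) * dm n (de r)) $$ (k, l) = (q + (de r j * t) \<cdot>\<^sub>m emat m n b j) $$ (k, l)"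
    unfolding dm_right[OF X k l] using k l q z[OF k]
    by (cases "l = r"; simp add: emat_def de_def)
qed (simp_all add: dm_def emat_def)

fun wt :: "nat \<Rightarrow> coord \<Rightarrow> complex" where
  "wt r (CB m l) = dd r m * de r l"
| "wt r (CP i a) = dd r i"
| "wt r (CPb b j) = de r j"

definition zrc :: "nat \<Rightarrow> nat \<Rightarrow> nat \<Rightarrow> rep \<Rightarrow> bool" where
  "zrc n K r y \<longleftrightarrow> (\<forall>j<n. fst y $$ (r, j) = 0) \<and> (\<forall>i<n. fst y $$ (i, r) = 0)
     \<and> (\<forall>a<K. fst (snd y) $$ (r, a) = 0) \<and> (\<forall>b<K. snd (snd y) $$ (b, r) = 0)"

lemma scale_bump:
  assumes y: "y \<in> Rep n K" and z: "zrc n K r y"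
  shows "act (dm n (dd r)) (dm n (de r)) (bump y c t) = bump y c (wt r c * t)"
proof -
  obtain B p q where e: "y = (B, p, q)" by (cases y)
  have B: "B \<in> carrier_mat n n" and p: "p \<in> carrier_mat n K" and q: "q \<in> carrier_mat K n"
    using y e by (auto simp: Rep_def)
  have d: "dim_row B = n" "dim_col B = n" "dim_row p = n" "dim_col p = K" "dim_row q = K" "dim_col q = n"
    using B p q by auto
  have zB1: "\<And>j. j < n \<Longrightarrow> B $$ (r, j) = 0" and zB2: "\<And>i. i < n \<Longrightarrow> B $$ (i, r) = 0"
    and zp: "\<And>a. a < K \<Longrightarrow> p $$ (r, a) = 0" and zq: "\<And>b. b < K \<Longrightarrow> q $$ (b, r) = 0"
    using z e by (auto simp: zrc_def)
  have iB: "dm n (dd r) * B * dm n (de r) = B"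
    using dm_left_id[OF B zB1] dm_right_id[OF B zB2] by simp
  have ip: "dm n (dd r) * p = p" by (rule dm_left_id[OF p zp])
  have iq: "q * dm n (de r) = q" by (rule dm_right_id[OF q zq])
  show ?thesis
  proof (cases c)
    case (CB m l)
    show ?thesis unfolding e CB bump.simps act.simps d ip iq wt.simps using dm_both[OF B zB1 zB2] by simp
  next
    case (CP i a)
    show ?thesis unfolding e CP bump.simps act.simps d iq wt.simps using iB dm_left_bump[OF p zp] by simp
  next
    case (CPb b j)
    show ?thesis unfolding e CPb bump.simps act.simps d ip wt.simps using iB dm_right_bump[OF q zq] by simp
  qed
qed

lemma pd_vanish:
  assumes f: "invpoly n K f" and y: "y \<in> Rep n K" and z: "zrc n K r y" and c: "c \<in> coords n K"
    and w: "wt r c \<noteq> 1"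
  shows "pd f c y = 0"
proof (rule pd_zero[OF _ y c w])
  show "f \<in> polyfun n K" using f by (simp add: invpoly_def)
  fix t
  have "f (bump y c (wt r c * t)) = f (act (dm n (dd r)) (dm n (de r)) (bump y c t))"
    using scale_bump[OF y z] by simp
  also have "\<dots> = f (bump y c t)"
    using f bump_Rep[OF y] dm_one[of "dd r" "de r" n, OF dd_de] unfolding invpoly_def by simp
  finally show "f (bump y c (wt r c * t)) = f (bump y c t)" .
qed

lemma extr_zrc:
  assumes "N \<le> r" "r < N'"
  shows "zrc N' K r (extr N N' K x)"
  using assms by (cases x) (simp add: zrc_def extr_def)

lemma extr_bump:
  assumes x: "x \<in> Rep N K" and c: "c \<in> coords N K"
  shows "extr N N' K (bump x c t) = bump (extr N N' K x) c t"
proof -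
  obtain B p q where e: "x = (B, p, q)" by (cases x)
  have d: "dim_row B = N" "dim_col B = N" "dim_row p = N" "dim_col p = K" "dim_row q = K" "dim_col q = N"
    using x e by (auto simp: Rep_def)
  show ?thesis
  proof (cases c)
    case (CB i j)
    then have ij: "i < N" "j < N" using c by simp_all
    have "mat N' N' (\<lambda>(k, l). if k < N \<and> l < N then (B + t \<cdot>\<^sub>m emat N N i j) $$ (k, l) else 0)
      = mat N' N' (\<lambda>(k, l). if k < N \<and> l < N then B $$ (k, l) else 0) + t \<cdot>\<^sub>m emat N' N' i j"
      by (rule eq_matI) (use ij d in \<open>simp_all add: emat_def\<close>)
    then show ?thesis unfolding e CB by (simp add: extr_def d)
  next
    case (CP i a)
    then have ij: "i < N" "a < K" using c by simp_all
    have "mat N' K (\<lambda>(k, l). if k < N then (p + t \<cdot>\<^sub>m emat N K i a) $$ (k, l) else 0)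
      = mat N' K (\<lambda>(k, l). if k < N then p $$ (k, l) else 0) + t \<cdot>\<^sub>m emat N' K i a"
      by (rule eq_matI) (use ij d in \<open>simp_all add: emat_def\<close>)
    then show ?thesis unfolding e CP by (simp add: extr_def d)
  next
    case (CPb b j)
    then have ij: "b < K" "j < N" using c by simp_all
    have "mat K N' (\<lambda>(k, l). if l < N then (q + t \<cdot>\<^sub>m emat K N b j) $$ (k, l) else 0)
      = mat K N' (\<lambda>(k, l). if l < N then q $$ (k, l) else 0) + t \<cdot>\<^sub>m emat K N' b j"
      by (rule eq_matI) (use ij d in \<open>simp_all add: emat_def\<close>)
    then show ?thesis unfolding e CPb by (simp add: extr_def d)
  qed
qed

lemma cbr_extr:
  assumes x: "x \<in> Rep N K" and c: "c \<in> coords N K" and c': "c' \<in> coords N K" and NN: "N \<le> N'"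
  shows "cbr K c c' (extr N N' K x) = cbr K c c' x"
proof -
  obtain B p q where e: "x = (B, p, q)" by (cases x)
  have ex: "extr N N' K x = (mat N' N' (\<lambda>(i, j). if i < N \<and> j < N then B $$ (i, j) else 0),
      mat N' K (\<lambda>(i, a). if i < N then p $$ (i, a) else 0),
      mat K N' (\<lambda>(b, j). if j < N then q $$ (b, j) else 0))" unfolding e extr_def by simp
  have s: "(\<Sum>a<K. mat K N' (\<lambda>(b, j). if j < N then q $$ (b, j) else 0) $$ (a, v) *
            mat N' K (\<lambda>(i, a). if i < N then p $$ (i, a) else 0) $$ (u, a))
        = (\<Sum>a<K. q $$ (a, v) * p $$ (u, a))" if "u < N" "v < N" for u v
    using that NN by (intro sum.cong) auto
  show ?thesis
  proof (cases c)
    case (CB m l)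
    show ?thesis
    proof (cases c')
      case (CB m' l')
      have b: "m < N" "l < N" "m' < N" "l' < N" using c c' \<open>c = CB m l\<close> CB by simp_all
      show ?thesis unfolding ex unfolding e \<open>c = CB m l\<close> CB cbr.simps using s b by simp
    qed (simp_all add: \<open>c = CB m l\<close> ex e)
  qed (cases c'; simp add: ex e)+
qed

lemma cbr_diag:
  assumes z: "zrc N' K k y"
  shows "cbr K (CB k k) c' y = 0" "cbr K c' (CB k k) y = 0"
proof -
  obtain B p q where e: "y = (B, p, q)" by (cases y)
  have zp: "\<And>a. a < K \<Longrightarrow> p $$ (k, a) = 0" and zq: "\<And>b. b < K \<Longrightarrow> q $$ (b, k) = 0"
    using z e by (auto simp: zrc_def)
  have s1: "(\<Sum>a<K. q $$ (a, v) * p $$ (k, a)) = 0" for v using zp by (intro sum.neutral) auto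
  have s2: "(\<Sum>a<K. q $$ (a, k) * p $$ (u, a)) = 0" for u using zq by (intro sum.neutral) auto
  show "cbr K (CB k k) c' y = 0" unfolding e by (cases c') (auto simp: s1 s2)
  show "cbr K c' (CB k k) y = 0" unfolding e by (cases c') (auto simp: s1 s2)
qed

lemma classify:
  assumes c: "c \<in> coords N' K" and nc: "c \<notin> coords N K"
  shows "(\<exists>r. N \<le> r \<and> r < N' \<and> wt r c \<noteq> 1) \<or> (\<exists>k. N \<le> k \<and> k < N' \<and> c = CB k k)"
proof (cases c)
  case (CB m l)
  then have b: "m < N'" "l < N'" "\<not> (m < N \<and> l < N)" using c nc by simp_all
  show ?thesis
  proof (cases "m = l")
    case True
    then show ?thesis using b CB by auto
  next
    case False
    show ?thesis
    proof (cases "N \<le> m")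
      case True
      then show ?thesis using b False CB by (intro disjI1 exI[of _ m]) (simp add: dd_def de_def)
    next
      case nm: False
      then show ?thesis using b False CB by (intro disjI1 exI[of _ l]) (simp add: dd_def de_def)
    qed
  qed
next
  case (CP i a)
  then have b: "i < N'" "\<not> i < N" using c nc by simp_all
  then show ?thesis using CP by (intro disjI1 exI[of _ i]) (simp add: dd_def)
next
  case (CPb b j)
  then have bb: "j < N'" "\<not> j < N" using c nc by simp_all
  then show ?thesis using CPb by (intro disjI1 exI[of _ j]) (simp add: de_def)
qed

lemma coords_mono: "N \<le> N' \<Longrightarrow> coords N K \<subseteq> coords N' K"
  unfolding coords_def by auto

lemma part2:
  assumes NN: "N < N'" and f: "invpoly N' K f" and g: "invpoly N' K g" and x: "x \<in> Rep N K"
  shows "pbr N K (\<lambda>y. f (iota N N' K y)) (\<lambda>y. g (iota N N' K y)) x = pbr N' K f g (iota N N' K x)"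
proof -
  define y where "y = iota N N' K x"
  have yR: "y \<in> Rep N' K" using iota_Rep x NN y_def by auto
  have ye: "y = extr N N' K x" using iota_extr x NN y_def by auto
  define T where "T = (\<lambda>c c'. pd f c y * pd g c' y * cbr K c c' y)"
  have van: "pd h c y = 0 \<or> (\<forall>c'. cbr K c c' y = 0 \<and> cbr K c' c y = 0)"
    if h: "invpoly N' K h" and c: "c \<in> coords N' K" "c \<notin> coords N K" for h c
  proof -
    from classify[OF c] show ?thesis
    proof
      assume "\<exists>r. N \<le> r \<and> r < N' \<and> wt r c \<noteq> 1"
      then obtain r where r: "N \<le> r" "r < N'" "wt r c \<noteq> 1" by blast
      have "pd h c y = 0" using pd_vanish[OF h yR _ c(1) r(3)] extr_zrc[OF r(1,2)] ye by simp
      then show ?thesis by simp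
    next
      assume "\<exists>k. N \<le> k \<and> k < N' \<and> c = CB k k"
      then obtain k where k: "N \<le> k" "k < N'" "c = CB k k" by blast
      have "zrc N' K k y" using extr_zrc[OF k(1,2)] ye by simp
      then show ?thesis using cbr_diag k(3) by simp
    qed
  qed
  have T0: "T c c' = 0" if "c \<in> coords N' K" "c' \<in> coords N' K" "c \<notin> coords N K \<or> c' \<notin> coords N K" for c c'
    using that van[OF f, of c] van[OF g, of c'] unfolding T_def by auto
  have sub: "coords N K \<subseteq> coords N' K" using coords_mono NN by simp
  have "pbr N' K f g y = (\<Sum>c\<in>coords N' K. \<Sum>c'\<in>coords N' K. T c c')"
    unfolding pbr_def T_def ..
  also have "\<dots> = (\<Sum>c\<in>coords N' K. \<Sum>c'\<in>coords N K. T c c')"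
    by (rule sum.cong[OF refl], rule sum.mono_neutral_right[OF finite_coords sub]) (use T0 in auto)
  also have "\<dots> = (\<Sum>c\<in>coords N K. \<Sum>c'\<in>coords N K. T c c')"
    by (rule sum.mono_neutral_right[OF finite_coords sub]) (use T0 sub in \<open>auto intro!: sum.neutral\<close>)
  also have "\<dots> = pbr N K (\<lambda>y. f (iota N N' K y)) (\<lambda>y. g (iota N N' K y)) x"
    unfolding pbr_def
  proof (intro sum.cong refl)
    fix c c' assume c: "c \<in> coords N K" and c': "c' \<in> coords N K"
    have pc: "pd (\<lambda>y. h (iota N N' K y)) c'' x = pd h c'' y" if "c'' \<in> coords N K" for h c''
    proof -
      have "(\<lambda>t. h (iota N N' K (bump x c'' t))) = (\<lambda>t. h (bump y c'' t))"
        using iota_extr[OF bump_Rep[OF x] less_imp_le[OF NN]] extr_bump[OF x that] ye by simp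
      then show ?thesis unfolding pd_def by simp
    qed
    show "T c c' = pd (\<lambda>y. f (iota N N' K y)) c x * pd (\<lambda>y. g (iota N N' K y)) c' x * cbr K c c' x"
      unfolding T_def pc[OF c] pc[OF c'] ye cbr_extr[OF x c c' less_imp_le[OF NN]] ..
  qed
  finally show ?thesis unfolding y_def ..
qed


theorem mainTheorem11:
  shows
   "(\<forall>N N' N'' K. N < N' \<and> N' < N'' \<longrightarrow>
       (\<forall>X\<in>Mq N K. qmap N'' K (iota N' N'' K) (qmap N' K (iota N N' K) X)
                    = qmap N'' K (iota N N'' K) X))
  \<and> (\<forall>N N' K. N < N' \<longrightarrow>
       (\<forall>f g. invpoly N' K f \<and> invpoly N' K g \<longrightarrow>
          (\<forall>x\<in>Rep N K. pbr N K (\<lambda>y. f (iota N N' K y)) (\<lambda>y. g (iota N N' K y)) x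
                        = pbr N' K f g (iota N N' K x))))
  \<and> (\<forall>N1 N1' N2 N2' K. N1 \<le> N1' \<and> N2 \<le> N2' \<longrightarrow>
       (\<forall>X1\<in>Mq N1 K. \<forall>X2\<in>Mq N2 K.
          qmap2 (N1' + N2') K (mmap N1' N2' K)
                (qmap N1' K (iota N1 N1' K) X1) (qmap N2' K (iota N2 N2' K) X2)
        = qmap (N1' + N2') K (iota (N1 + N2) (N1' + N2') K)
                (qmap2 (N1 + N2) K (mmap N1 N2 K) X1 X2)))"
proof (intro conjI allI impI ballI)
  fix N N' N'' K X
  assume "N < N' \<and> N' < N''" "X \<in> Mq N K"
  then show "qmap N'' K (iota N' N'' K) (qmap N' K (iota N N' K) X) = qmap N'' K (iota N N'' K) X"
    using part1 by blast
next
  fix N N' K f g x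
  assume "N < N'" "invpoly N' K f \<and> invpoly N' K g" "x \<in> Rep N K"
  then show "pbr N K (\<lambda>y. f (iota N N' K y)) (\<lambda>y. g (iota N N' K y)) x = pbr N' K f g (iota N N' K x)"
    using part2 by blast
next
  fix N1 N1' N2 N2' K X1 X2
  assume "N1 \<le> N1' \<and> N2 \<le> N2'" "X1 \<in> Mq N1 K" "X2 \<in> Mq N2 K"
  then show "qmap2 (N1' + N2') K (mmap N1' N2' K)
                (qmap N1' K (iota N1 N1' K) X1) (qmap N2' K (iota N2 N2' K) X2)
        = qmap (N1' + N2') K (iota (N1 + N2) (N1' + N2') K)
                (qmap2 (N1 + N2) K (mmap N1 N2 K) X1 X2)"
    using part3 by blast
qed

end
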